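(* There is an absolute constant $c>0$ such that the following holds. Let $d\ge1$, $r\le 1/2$, $\eta\in(0,1/2)$, $\delta\in(0,1)$, let $\phi=\min(\eta,\tfrac12-\eta)$, and suppose $$N\ge \frac{16}{(cr)^d\phi^2}\left(\ln\frac{8}{(cr)^d\phi^2}+\ln\frac1\delta\right).$$ Then with probability at least $1-\delta$ there exists an ordering (permutation) $\pi$ of the sensors such that asynchronous best-response updates in the order $\pi$ cause all sensors to end in the same state (regardless of how ties are broken).
   Context: Sensors $1,\dots,N$ have positions $x_1,\dots,x_N$ drawn i.i.d. uniformly from the unit ball $\{x\in\mathbb{R}^d:\|x\|\le 1\}$. The target separator is the hyperplane $\{x: w\cdot x=0\}$ for a fixed unit vector $w$, and the target label of $x$ is $t(x)=\mathrm{sign}(w\cdot x)$. Here the noise rate is exactly $\eta$: conditional on the positions, the initial states in $\{+1,-1\}$ are independent, and sensor $i$'s initial state equals $t(x_i)$ with probability $1-\eta$ and equals $-t(x_i)$ with probability $\eta$. Distinct sensors $i\ne j$ are neighbors if $\|x_i-x_j\|\le r$. A best-response update of sensor $i$ sets its state to the majority state among its neighbors' current states (ties broken arbitrarily). Asynchronous updates in order $\pi$: sensors $\pi(1),\pi(2),\dots,\pi(N)$ each perform one best-response update, one at a time, each using the states current at the time of its update. *)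

theory Defs
  imports "HOL-Probability.Probability"
begin

text \<open>Points of R^d are represented as functions nat => real, with coordinates 0..d-1.\<close>

definition unit_ball_d :: "nat \<Rightarrow> (nat \<Rightarrow> real) set" where
  "unit_ball_d d = {x \<in> PiE {..<d} (\<lambda>_. UNIV). (\<Sum>i<d. (x i)^2) \<le> 1}"

definition dist_d :: "nat \<Rightarrow> (nat \<Rightarrow> real) \<Rightarrow> (nat \<Rightarrow> real) \<Rightarrow> real" where
  "dist_d d x y = sqrt (\<Sum>i<d. (x i - y i)^2)"

definition uniform_ball :: "nat \<Rightarrow> (nat \<Rightarrow> real) measure" where
  "uniform_ball d = uniform_measure (PiM {..<d} (\<lambda>_. lborel)) (unit_ball_d d)"

text \<open>Sensor model: for each sensor i < N, a position (uniform on the ball) and an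
  independent flag that is True with probability eta (the initial state is flipped).\<close>
definition sensor_model :: "nat \<Rightarrow> nat \<Rightarrow> real \<Rightarrow> (nat \<Rightarrow> (nat \<Rightarrow> real) \<times> bool) measure" where
  "sensor_model d N \<eta> = PiM {..<N} (\<lambda>_. uniform_ball d \<Otimes>\<^sub>M measure_pmf (bernoulli_pmf \<eta>))"

text \<open>Target label sign(w . x); the measure-zero boundary case w . x = 0 is labelled +1.\<close>
definition target :: "nat \<Rightarrow> (nat \<Rightarrow> real) \<Rightarrow> (nat \<Rightarrow> real) \<Rightarrow> int" where
  "target d w x = (if (\<Sum>i<d. w i * x i) \<ge> 0 then 1 else -1)"

definition init_state :: "nat \<Rightarrow> (nat \<Rightarrow> real) \<Rightarrow> (nat \<Rightarrow> (nat \<Rightarrow> real) \<times> bool) \<Rightarrow> nat \<Rightarrow> int" where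
  "init_state d w \<omega> i = (if snd (\<omega> i) then - target d w (fst (\<omega> i)) else target d w (fst (\<omega> i)))"

definition neighbors :: "nat \<Rightarrow> nat \<Rightarrow> real \<Rightarrow> (nat \<Rightarrow> nat \<Rightarrow> real) \<Rightarrow> nat \<Rightarrow> nat set" where
  "neighbors d N r x j = {i \<in> {..<N}. i \<noteq> j \<and> dist_d d (x i) (x j) \<le> r}"

text \<open>Best response of sensor j: majority state among neighbours; the tie value b
  (in {-1,1}) is used when there is a tie (including no neighbours).\<close>
definition br_update :: "nat \<Rightarrow> nat \<Rightarrow> real \<Rightarrow> (nat \<Rightarrow> nat \<Rightarrow> real) \<Rightarrow> (nat \<Rightarrow> int) \<Rightarrow> nat \<Rightarrow> int \<Rightarrow> (nat \<Rightarrow> int)" where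
  "br_update d N r x s j b =
     (let S = (\<Sum>i\<in>neighbors d N r x j. s i)
      in s(j := (if S > 0 then 1 else if S < 0 then -1 else b)))"

primrec async_run :: "nat \<Rightarrow> nat \<Rightarrow> real \<Rightarrow> (nat \<Rightarrow> nat \<Rightarrow> real) \<Rightarrow> (nat \<Rightarrow> nat) \<Rightarrow> (nat \<Rightarrow> int) \<Rightarrow> (nat \<Rightarrow> int) \<Rightarrow> nat \<Rightarrow> (nat \<Rightarrow> int)" where
  "async_run d N r x \<pi> b s0 0 = s0"
| "async_run d N r x \<pi> b s0 (Suc k) = br_update d N r x (async_run d N r x \<pi> b s0 k) (\<pi> k) (b k)"

definition consensus_event :: "nat \<Rightarrow> nat \<Rightarrow> real \<Rightarrow> (nat \<Rightarrow> real) \<Rightarrow> (nat \<Rightarrow> (nat \<Rightarrow> real) \<times> bool) \<Rightarrow> bool" where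
  "consensus_event d N r w \<omega> =
     (\<exists>\<pi>. bij_betw \<pi> {..<N} {..<N} \<and>
        (\<forall>b. (\<forall>k. b k \<in> {-1, 1}) \<longrightarrow>
           (\<exists>v. \<forall>i<N. async_run d N r (\<lambda>i. fst (\<omega> i)) \<pi> b (init_state d w \<omega>) N i = v)))"

end

theory Submission
  imports Defs
begin



abbreviation LL :: "nat \<Rightarrow> (nat \<Rightarrow> real) measure" where
  "LL d \<equiv> PiM {..<d} (\<lambda>_. lborel)"

definition scaled :: "nat \<Rightarrow> ennreal \<Rightarrow> ((nat \<Rightarrow> real) \<Rightarrow> (nat \<Rightarrow> real)) \<Rightarrow> bool" where
  "scaled d c T \<longleftrightarrow> T \<in> LL d \<rightarrow>\<^sub>M LL d \<and>
     (\<forall>S\<in>sets (LL d). emeasure (LL d) (T -` S \<inter> space (LL d)) = c * emeasure (LL d) S)"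

lemma scaled_comp:
  assumes "scaled d c1 T1" "scaled d c2 T2"
  shows "scaled d (c1 * c2) (T2 \<circ> T1)"
proof -
  have m1: "T1 \<in> LL d \<rightarrow>\<^sub>M LL d" and m2: "T2 \<in> LL d \<rightarrow>\<^sub>M LL d" using assms by (auto simp: scaled_def)
  have "(T2 \<circ> T1) -` S \<inter> space (LL d) = T1 -` (T2 -` S \<inter> space (LL d)) \<inter> space (LL d)" for S
    using measurable_space[OF m1] by auto
  moreover have "T2 -` S \<inter> space (LL d) \<in> sets (LL d)" if "S \<in> sets (LL d)" for S
    using m2 that by (rule measurable_sets)
  ultimately show ?thesis using assms m1 m2
    unfolding scaled_def
    apply (intro conjI)
     apply (blast intro: measurable_comp)
    apply (intro ballI)
    apply (simp only:)
    apply (simp add: mult.assoc)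
    done
qed

lemma scaled_cong:
  assumes "scaled d c T" "\<And>y. y \<in> space (LL d) \<Longrightarrow> T y = T' y"
  shows "scaled d c T'"
proof -
  have "T' \<in> LL d \<rightarrow>\<^sub>M LL d"
    using assms by (auto simp: scaled_def intro: measurable_cong[THEN iffD1])
  moreover have "T' -` S \<inter> space (LL d) = T -` S \<inter> space (LL d)" for S using assms(2) by auto
  ultimately show ?thesis using assms(1) by (auto simp: scaled_def)
qed

lemma core_scaled:
  fixes a :: real and f :: "(nat \<Rightarrow> real) \<Rightarrow> real"
  assumes i: "i < d" and a: "a \<noteq> 0"
    and fm: "f \<in> borel_measurable (LL d)"
    and fi: "\<And>y v. f (y(i := v)) = f y"
  shows "scaled d (ennreal (1 / \<bar>a\<bar>)) (\<lambda>y. y(i := a * y i + f y))"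
proof -
  interpret product_sigma_finite "\<lambda>_::nat. lborel :: real measure" by standard
  define I' where "I' = {..<d} - {i}"
  have I: "{..<d} = insert i I'" "finite I'" "i \<notin> I'" using i by (auto simp: I'_def)
  let ?T = "\<lambda>y::nat\<Rightarrow>real. y(i := a * y i + f y)"
  have Tm: "?T \<in> LL d \<rightarrow>\<^sub>M LL d"
  proof (rule measurable_PiM_single')
    fix k assume k: "k \<in> {..<d}"
    show "(\<lambda>\<omega>. (?T \<omega>) k) \<in> LL d \<rightarrow>\<^sub>M lborel"
    proof (cases "k = i")
      case True then show ?thesis using i fm by simp
    next
      case False then show ?thesis using k by simp
    qed
  next
    show "?T \<in> space (LL d) \<rightarrow> (\<Pi>\<^sub>E i\<in>{..<d}. space lborel)"
      using i by (auto simp: space_PiM PiE_def extensional_def)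
  qed
  have main: "emeasure (LL d) (?T -` S \<inter> space (LL d)) = ennreal (1 / \<bar>a\<bar>) * emeasure (LL d) S"
    if S: "S \<in> sets (LL d)" for S
  proof -
    have Sm: "indicator S \<in> borel_measurable (LL d)" using S by simp
    have pm: "?T -` S \<inter> space (LL d) \<in> sets (LL d)" using Tm S by (rule measurable_sets)
    have "emeasure (LL d) (?T -` S \<inter> space (LL d)) = (\<integral>\<^sup>+ y. indicator (?T -` S \<inter> space (LL d)) y \<partial>LL d)"
      using pm by simp
    also have "\<dots> = (\<integral>\<^sup>+ x. (\<integral>\<^sup>+ v. indicator (?T -` S \<inter> space (LL d)) (x(i := v)) \<partial>lborel) \<partial>PiM I' (\<lambda>_. lborel))"
      unfolding I(1) by (rule product_nn_integral_insert) (use I pm[unfolded I(1)] in auto)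
    also have "\<dots> = (\<integral>\<^sup>+ x. ennreal (1 / \<bar>a\<bar>) * (\<integral>\<^sup>+ v. indicator S (x(i := v)) \<partial>lborel) \<partial>PiM I' (\<lambda>_. lborel))"
    proof (rule nn_integral_cong)
      fix x assume x: "x \<in> space (PiM I' (\<lambda>_. lborel :: real measure))"
      have xs: "x(i := v) \<in> space (LL d)" for v using x I by (auto simp: space_PiM PiE_def extensional_def)
      have gm: "(\<lambda>v. indicator S (x(i := v)) :: ennreal) \<in> borel_measurable borel"
      proof -
        have "(\<lambda>v. x(i := v)) \<in> lborel \<rightarrow>\<^sub>M LL d"
          using measurable_component_update[OF x I(3)] I(1) by simp
        from measurable_comp[OF this Sm] show ?thesis by (simp add: comp_def)
      qed
      have eq: "indicator (?T -` S \<inter> space (LL d)) (x(i := v)) = (indicator S (x(i := f x + a * v)) :: ennreal)" for v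
        using xs[of v] fi[of x v] by (simp add: indicator_def mult.commute add.commute)
      have "(\<integral>\<^sup>+ v. indicator S (x(i := v)) \<partial>lborel) = ennreal \<bar>a\<bar> * (\<integral>\<^sup>+ v. indicator S (x(i := f x + a * v)) \<partial>lborel)"
        using nn_integral_real_affine[OF gm a, of "f x"] by simp
      then have "(\<integral>\<^sup>+ v. indicator S (x(i := f x + a * v)) \<partial>lborel) = ennreal (1 / \<bar>a\<bar>) * (\<integral>\<^sup>+ v. indicator S (x(i := v)) \<partial>lborel)"
        using a by (simp add: ennreal_mult'[symmetric] mult.assoc[symmetric] divide_simps flip: ennreal_mult)
      then show "(\<integral>\<^sup>+ v. indicator (?T -` S \<inter> space (LL d)) (x(i := v)) \<partial>lborel) = ennreal (1 / \<bar>a\<bar>) * (\<integral>\<^sup>+ v. indicator S (x(i := v)) \<partial>lborel)"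
        by (simp add: eq)
    qed
    also have "\<dots> = ennreal (1 / \<bar>a\<bar>) * (\<integral>\<^sup>+ x. (\<integral>\<^sup>+ v. indicator S (x(i := v)) \<partial>lborel) \<partial>PiM I' (\<lambda>_. lborel))"
    proof (rule nn_integral_cmult)
      have "(\<lambda>(x, v). x(i := v)) \<in> PiM I' (\<lambda>_. lborel) \<Otimes>\<^sub>M lborel \<rightarrow>\<^sub>M LL d"
        unfolding I(1) by (rule measurable_add_dim)
      from measurable_comp[OF this Sm]
      have "case_prod (\<lambda>x v. indicator S (x(i := v)) :: ennreal) \<in> borel_measurable (PiM I' (\<lambda>_. lborel) \<Otimes>\<^sub>M lborel)"
        by (simp add: comp_def split_beta')
      then show "(\<lambda>x. \<integral>\<^sup>+ v. indicator S (x(i := v)) \<partial>lborel) \<in> borel_measurable (PiM I' (\<lambda>_. lborel))"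
        by (rule lborel.borel_measurable_nn_integral)
    qed
    also have "(\<integral>\<^sup>+ x. (\<integral>\<^sup>+ v. indicator S (x(i := v)) \<partial>lborel) \<partial>PiM I' (\<lambda>_. lborel)) = (\<integral>\<^sup>+ y. indicator S y \<partial>LL d)"
      unfolding I(1) by (rule product_nn_integral_insert[symmetric]) (use I Sm[unfolded I(1)] in auto)
    also have "\<dots> = emeasure (LL d) S" using S by simp
    finally show ?thesis .
  qed
  show ?thesis using Tm main by (auto simp: scaled_def)
qed

definition indepc :: "nat set \<Rightarrow> ((nat \<Rightarrow> real) \<Rightarrow> real) \<Rightarrow> bool" where
  "indepc J g \<longleftrightarrow> (\<forall>y y'. (\<forall>m. m \<notin> J \<longrightarrow> y m = y' m) \<longrightarrow> g y = g y')"

lemma multi_scaled: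
  assumes "finite J" "J \<subseteq> {..<d}"
    and "\<And>k. k \<in> J \<Longrightarrow> a k \<noteq> 0"
    and "\<And>k. k \<in> J \<Longrightarrow> g k \<in> borel_measurable (LL d)"
    and "\<And>k. k \<in> J \<Longrightarrow> indepc J (g k)"
  shows "scaled d (\<Prod>k\<in>J. ennreal (1 / \<bar>a k\<bar>)) (\<lambda>y. \<lambda>k. if k \<in> J then a k * y k + g k y else y k)"
  using assms
proof (induction J rule: finite_induct)
  case empty
  show ?case by (simp add: scaled_def)
next
  case (insert j J)
  have IH: "scaled d (\<Prod>k\<in>J. ennreal (1 / \<bar>a k\<bar>)) (\<lambda>y. \<lambda>k. if k \<in> J then a k * y k + g k y else y k)"
  proof (rule insert.IH)
    fix k assume k: "k \<in> J"
    then show "indepc J (g k)" using insert.prems(4)[of k] by (auto simp: indepc_def)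
  qed (use insert.prems in auto)
  have T: "scaled d (ennreal (1 / \<bar>a j\<bar>)) (\<lambda>y. y(j := a j * y j + g j y))"
  proof (rule core_scaled)
    show "g j (y(j := v)) = g j y" for y v using insert.prems(4)[of j] by (auto simp: indepc_def)
  qed (use insert.prems in auto)
  from scaled_comp[OF IH T] have C: "scaled d ((\<Prod>k\<in>J. ennreal (1 / \<bar>a k\<bar>)) * ennreal (1 / \<bar>a j\<bar>))
     ((\<lambda>y. y(j := a j * y j + g j y)) \<circ> (\<lambda>y. \<lambda>k. if k \<in> J then a k * y k + g k y else y k))" .
  show ?case
  proof (rule scaled_cong)
    show "scaled d (\<Prod>k\<in>insert j J. ennreal (1 / \<bar>a k\<bar>)) ((\<lambda>y. y(j := a j * y j + g j y)) \<circ> (\<lambda>y. \<lambda>k. if k \<in> J then a k * y k + g k y else y k))"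
      using C insert.hyps by (simp add: mult.commute)
  next
    fix y
    have "g j (\<lambda>k. if k \<in> J then a k * y k + g k y else y k) = g j y"
      using insert.prems(4)[of j] insert.hyps by (auto simp: indepc_def)
    then show "((\<lambda>y. y(j := a j * y j + g j y)) \<circ> (\<lambda>y. \<lambda>k. if k \<in> J then a k * y k + g k y else y k)) y =
      (\<lambda>k. if k \<in> insert j J then a k * y k + g k y else y k)"
      using insert.hyps by (auto simp: fun_eq_iff)
  qed
qed




definition hh :: "nat \<Rightarrow> (nat \<Rightarrow> real) \<Rightarrow> (nat \<Rightarrow> real) \<Rightarrow> real" where
  "hh d w y = (\<Sum>k<d. w k * y k)"

definition reflw :: "nat \<Rightarrow> (nat \<Rightarrow> real) \<Rightarrow> real \<Rightarrow> (nat \<Rightarrow> real) \<Rightarrow> (nat \<Rightarrow> real)" where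
  "reflw d w a y = (\<lambda>k. if k < d then y k - 2 * (hh d w y - a) * w k else y k)"

lemma sum_component_measurable[measurable]:
  "(\<lambda>y. \<Sum>j\<in>J. c j * y j) \<in> borel_measurable (LL d)" if "J \<subseteq> {..<d}"
  using that by (intro borel_measurable_sum) (auto intro!: borel_measurable_times)

lemma refl_scaled:
  assumes w: "(\<Sum>k<d. (w k)^2) = 1"
  shows "scaled d 1 (reflw d w a)"
proof -
  obtain k0 where k0: "k0 < d" "w k0 \<noteq> 0"
  proof (rule ccontr)
    assume "\<not> thesis"
    then have "\<forall>k<d. w k = 0" using that by blast
    then have "(\<Sum>k<d. (w k)^2) = 0" by simp
    then show False using w by simp
  qed
  define J where "J = {..<d} - {k0}"
  have J: "finite J" "J \<subseteq> {..<d}" "k0 \<notin> J" "{..<d} = insert k0 J" using k0 by (auto simp: J_def)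
  define f1 where "f1 y = (\<Sum>j\<in>J. w j * y j)" for y :: "nat \<Rightarrow> real"
  have f1m: "f1 \<in> borel_measurable (LL d)" unfolding f1_def using J by measurable
  have f1u: "f1 (y(k0 := v)) = f1 y" for y v unfolding f1_def using J by (intro sum.cong) auto
  define F1 where "F1 y = y(k0 := w k0 * y k0 + f1 y)" for y :: "nat \<Rightarrow> real"
  have S1: "scaled d (ennreal (1 / \<bar>w k0\<bar>)) F1"
    unfolding F1_def by (rule core_scaled) (use k0 f1m f1u in auto)
  define F2 where "F2 y = (\<lambda>k. if k \<in> J then 1 * y k + (-2 * w k * y k0) else y k)" for y :: "nat \<Rightarrow> real"
  have S2': "scaled d (\<Prod>k\<in>J. ennreal (1 / \<bar>1\<bar>)) F2"
    unfolding F2_def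
    by (rule multi_scaled[where a="\<lambda>_. 1" and g="\<lambda>k y. -2 * w k * y k0"]) (use J k0 in \<open>auto simp: indepc_def\<close>)
  then have S2: "scaled d 1 F2" by simp
  define f3 where "f3 y = - f1 y / w k0" for y :: "nat \<Rightarrow> real"
  have f3m: "f3 \<in> borel_measurable (LL d)" unfolding f3_def using f1m by measurable
  have f3u: "f3 (y(k0 := v)) = f3 y" for y v unfolding f3_def using f1u by simp
  define F3 where "F3 y = y(k0 := (-1 / w k0) * y k0 + f3 y)" for y :: "nat \<Rightarrow> real"
  have S3: "scaled d (ennreal (1 / \<bar>-1 / w k0\<bar>)) F3"
    unfolding F3_def by (rule core_scaled) (use k0 f3m f3u in auto)
  define Tr where "Tr y = (\<lambda>k. if k \<in> {..<d} then 1 * y k + 2 * a * w k else y k)" for y :: "nat \<Rightarrow> real"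
  have S4': "scaled d (\<Prod>k\<in>{..<d}. ennreal (1 / \<bar>1\<bar>)) Tr"
    unfolding Tr_def
    by (rule multi_scaled[where a="\<lambda>_. 1" and g="\<lambda>k y. 2 * a * w k"]) (auto simp: indepc_def)
  then have S4: "scaled d 1 Tr" by simp
  have "scaled d (ennreal (1 / \<bar>w k0\<bar>) * 1 * ennreal (1 / \<bar>-1 / w k0\<bar>) * 1) (Tr \<circ> F3 \<circ> F2 \<circ> F1)"
    using scaled_comp[OF scaled_comp[OF scaled_comp[OF S1 S2] S3] S4] by (simp add: comp_assoc)
  moreover have "ennreal (1 / \<bar>w k0\<bar>) * 1 * ennreal (1 / \<bar>-1 / w k0\<bar>) * 1 = 1"
    using k0 by (simp flip: ennreal_mult)
  ultimately have S: "scaled d 1 (Tr \<circ> F3 \<circ> F2 \<circ> F1)" by simp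
  show ?thesis
  proof (rule scaled_cong[OF S])
    fix y :: "nat \<Rightarrow> real"
    define s where "s = hh d w y"
    have s: "s = w k0 * y k0 + f1 y" unfolding s_def hh_def f1_def J(4) using J by simp
    have ww: "(\<Sum>j\<in>J. (w j)^2) = 1 - (w k0)^2" using w unfolding J(4) using J by simp
    have F1k: "F1 y k0 = s" "\<And>k. k \<noteq> k0 \<Longrightarrow> F1 y k = y k" by (auto simp: F1_def s)
    have F2k: "F2 (F1 y) k0 = s" "\<And>k. k \<in> J \<Longrightarrow> F2 (F1 y) k = y k - 2 * w k * s"
       "\<And>k. k \<notin> J \<Longrightarrow> k \<noteq> k0 \<Longrightarrow> F2 (F1 y) k = y k"
      using J F1k by (auto simp: F2_def) (metis J(3))
    have f1z: "f1 (F2 (F1 y)) = f1 y - 2 * s * (1 - (w k0)^2)"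
    proof -
      have "f1 (F2 (F1 y)) = (\<Sum>j\<in>J. w j * y j - 2 * s * (w j)^2)"
        unfolding f1_def by (intro sum.cong) (auto simp: F2k power2_eq_square algebra_simps)
      also have "\<dots> = f1 y - 2 * s * (\<Sum>j\<in>J. (w j)^2)"
        by (simp add: f1_def sum_subtractf sum_distrib_left)
      finally show ?thesis by (simp add: ww)
    qed
    have k0v: "F3 (F2 (F1 y)) k0 = y k0 - 2 * s * w k0"
    proof -
      have "F3 (F2 (F1 y)) k0 = (-1 / w k0) * s + f3 (F2 (F1 y))" by (simp add: F3_def F2k)
      also have "\<dots> = (- s - f1 y + 2 * s * (1 - (w k0)^2)) / w k0"
        using k0 by (simp add: f3_def f1z field_simps)
      also have "\<dots> = y k0 - 2 * s * w k0"
        using k0 by (simp add: s field_simps power2_eq_square)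
      finally show ?thesis .
    qed
    show "(Tr \<circ> F3 \<circ> F2 \<circ> F1) y = reflw d w a y"
    proof (rule ext)
      fix k
      show "(Tr \<circ> F3 \<circ> F2 \<circ> F1) y k = reflw d w a y k"
      proof (cases "k = k0")
        case True then show ?thesis using k0 k0v by (simp add: Tr_def reflw_def s_def algebra_simps)
      next
        case False
        then have "F3 (F2 (F1 y)) k = F2 (F1 y) k" by (simp add: F3_def)
        then show ?thesis using False F2k J unfolding Tr_def reflw_def s_def
          by (cases "k < d") (auto simp: algebra_simps)
      qed
    qed
  qed
qed




definition ballv :: "nat \<Rightarrow> (nat \<Rightarrow> real) \<Rightarrow> real \<Rightarrow> (nat \<Rightarrow> real) set" where
  "ballv d z \<rho> = {y \<in> space (LL d). dist_d d y z \<le> \<rho>}"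

lemma dist_L2: "dist_d d y x = L2_set (\<lambda>k. y k - x k) {..<d}"
  by (simp add: dist_d_def L2_set_def)

lemma space_LL: "space (LL d) = PiE {..<d} (\<lambda>_. UNIV)"
  by (simp add: space_PiM)

lemma dist_d_measurable[measurable]: "(\<lambda>y. dist_d d y z) \<in> borel_measurable (LL d)"
  unfolding dist_d_def by measurable

lemma hh_measurable[measurable]: "(\<lambda>y. hh d w y) \<in> borel_measurable (LL d)"
  unfolding hh_def by measurable

lemma ballv_sets[measurable]: "ballv d z \<rho> \<in> sets (LL d)"
  unfolding ballv_def by measurable

lemma emeasure_ballv:
  assumes "\<rho> > 0"
  shows "emeasure (LL d) (ballv d z \<rho>) = ennreal (unit_ball_vol (real d) * \<rho> ^ d)"
proof -
  define Tr where "Tr y = (\<lambda>k. if k \<in> {..<d} then 1 * y k + (- z k) else y k)" for y :: "nat \<Rightarrow> real"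
  have S': "scaled d (\<Prod>k\<in>{..<d}. ennreal (1 / \<bar>1\<bar>)) Tr"
    unfolding Tr_def
    by (rule multi_scaled[where a="\<lambda>_. 1" and g="\<lambda>k y. - z k"]) (auto simp: indepc_def)
  then have S: "scaled d 1 Tr" by simp
  define B0 where "B0 = {f. sqrt (\<Sum>i\<in>{..<d}. (f i)\<^sup>2) \<le> \<rho>} \<inter> space (LL d)"
  have B0: "B0 \<in> sets (LL d)" unfolding B0_def by measurable
  have sq: "(\<Sum>i<d. (Tr y i)\<^sup>2) = (\<Sum>i<d. (y i - z i)\<^sup>2)" for y
    by (intro sum.cong) (auto simp: Tr_def)
  have sp: "Tr y \<in> space (LL d)" if "y \<in> space (LL d)" for y
    using that unfolding space_LL PiE_iff extensional_def Tr_def by simp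
  have "Tr -` B0 \<inter> space (LL d) = ballv d z \<rho>"
    unfolding B0_def ballv_def dist_d_def using sp by (auto simp: sq)
  moreover have "emeasure (LL d) (Tr -` B0 \<inter> space (LL d)) = 1 * emeasure (LL d) B0"
    using S B0 unfolding scaled_def by blast
  ultimately have "emeasure (LL d) (ballv d z \<rho>) = emeasure (LL d) B0"
    by simp
  also have "\<dots> = ennreal (unit_ball_vol (real d) * \<rho> ^ d)"
    unfolding B0_def using emeasure_cball_aux[of "{..<d}" \<rho>] assms by simp
  finally show ?thesis .
qed

lemma unit_ball_ballv: "unit_ball_d d = ballv d (\<lambda>_. 0) 1"
proof -
  have "(\<Sum>i<d. (x i)^2) \<le> 1 \<longleftrightarrow> sqrt (\<Sum>i<d. (x i - 0)^2) \<le> 1" for x :: "nat \<Rightarrow> real"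
    by simp
  then show ?thesis unfolding unit_ball_d_def ballv_def dist_d_def space_LL by blast
qed

lemma hyperplane_null:
  assumes w: "(\<Sum>k<d. (w k)^2) = 1"
  shows "emeasure (LL d) {y \<in> space (LL d). hh d w y = a} = 0"
proof -
  interpret product_sigma_finite "\<lambda>_::nat. lborel :: real measure" by standard
  obtain k0 where k0: "k0 < d" "w k0 \<noteq> 0"
  proof (rule ccontr)
    assume "\<not> thesis"
    then have "\<forall>k<d. w k = 0" using that by blast
    then have "(\<Sum>k<d. (w k)^2) = 0" by simp
    then show False using w by simp
  qed
  define J where "J = {..<d} - {k0}"
  have J: "finite J" "k0 \<notin> J" "{..<d} = insert k0 J" using k0 by (auto simp: J_def)
  define P where "P = {y \<in> space (LL d). hh d w y = a}"
  have Pm: "P \<in> sets (LL d)" unfolding P_def by measurable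
  have "emeasure (LL d) P = (\<integral>\<^sup>+ y. indicator P y \<partial>LL d)" using Pm by simp
  also have "\<dots> = (\<integral>\<^sup>+ x. (\<integral>\<^sup>+ v. indicator P (x(k0 := v)) \<partial>lborel) \<partial>PiM J (\<lambda>_. lborel))"
    unfolding J(3) by (rule product_nn_integral_insert) (use J Pm[unfolded J(3)] in auto)
  also have "\<dots> = (\<integral>\<^sup>+ x. 0 \<partial>PiM J (\<lambda>_. lborel :: real measure))"
  proof -
   have "(\<integral>\<^sup>+ v. indicator P (x(k0 := v)) \<partial>lborel) = 0" for x :: "nat \<Rightarrow> real"
   proof -
    define c where "c = (a - (\<Sum>j\<in>J. w j * x j)) / w k0"
    have le: "indicator P (x(k0 := v)) \<le> (indicator {c} v :: ennreal)" for v
    proof (cases "x(k0 := v) \<in> P")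
      case True
      then have "hh d w (x(k0 := v)) = a" by (simp add: P_def)
      moreover have "hh d w (x(k0 := v)) = w k0 * v + (\<Sum>j\<in>J. w j * x j)"
        unfolding hh_def J(3) using J by (simp, intro sum.cong) auto
      ultimately have "v = c" using k0 by (simp add: c_def field_simps)
      then show ?thesis by (simp add: indicator_def)
    qed simp
    have "(\<integral>\<^sup>+ v. indicator P (x(k0 := v)) \<partial>lborel) \<le> (\<integral>\<^sup>+ v. indicator {c} v \<partial>lborel)"
      by (rule nn_integral_mono) (use le in auto)
    also have "\<dots> = 0" by simp
    finally show "(\<integral>\<^sup>+ v. indicator P (x(k0 := v)) \<partial>lborel) = 0" by simp
   qed
   then show ?thesis by simp
  qed
  also have "\<dots> = 0" by simp
  finally have "emeasure (LL d) P = 0" .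
  then show ?thesis by (simp add: P_def)
qed




lemma unit_ball_sets[measurable]: "unit_ball_d d \<in> sets (LL d)"
  by (simp add: unit_ball_ballv)

lemma unit_ball_space: "unit_ball_d d \<subseteq> space (LL d)"
  by (simp add: unit_ball_d_def space_LL)

definition Nb where "Nb d r x = {y \<in> unit_ball_d d. dist_d d y x \<le> r}"
definition Bs where "Bs d w r x = {y \<in> Nb d r x. hh d w y < hh d w x}"
definition Ap where "Ap d w r x = {y \<in> Nb d r x. hh d w y \<ge> hh d w x \<and> hh d w y \<ge> 0}"
definition Am where "Am d w r x = {y \<in> Nb d r x. hh d w y \<ge> hh d w x \<and> hh d w y < 0}"

lemma Nb_sets[measurable]: "Nb d r x \<in> sets (LL d)"
proof -
  have "Nb d r x = unit_ball_d d \<inter> {y \<in> space (LL d). dist_d d y x \<le> r}"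
    using unit_ball_space by (auto simp: Nb_def)
  also have "\<dots> \<in> sets (LL d)" by measurable
  finally show ?thesis .
qed

lemma Nb_space: "Nb d r x \<subseteq> space (LL d)"
  using unit_ball_space by (auto simp: Nb_def)

lemma sub_Nb_sets:
  "{y \<in> Nb d r x. P (hh d w y)} \<in> sets (LL d)" if [measurable]: "Measurable.pred borel P"
proof -
  have "{y \<in> Nb d r x. P (hh d w y)} = Nb d r x \<inter> {y \<in> space (LL d). P (hh d w y)}"
    using Nb_space by auto
  also have "\<dots> \<in> sets (LL d)" by measurable
  finally show ?thesis .
qed

lemma Bs_sets[measurable]: "Bs d w r x \<in> sets (LL d)"
  unfolding Bs_def by (rule sub_Nb_sets[where P="\<lambda>s. s < hh d w x"]) measurable
lemma Ap_sets[measurable]: "Ap d w r x \<in> sets (LL d)"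
  unfolding Ap_def by (rule sub_Nb_sets[where P="\<lambda>s. s \<ge> hh d w x \<and> s \<ge> 0"]) measurable
lemma Am_sets[measurable]: "Am d w r x \<in> sets (LL d)"
  unfolding Am_def by (rule sub_Nb_sets[where P="\<lambda>s. s \<ge> hh d w x \<and> s < 0"]) measurable

lemma refl_space: "y \<in> space (LL d) \<Longrightarrow> reflw d w a y \<in> space (LL d)"
  unfolding space_LL PiE_iff extensional_def reflw_def by simp

lemma hh_refl:
  assumes w: "(\<Sum>k<d. (w k)^2) = 1"
  shows "hh d w (reflw d w a y) = 2 * a - hh d w y"
proof -
  have "hh d w (reflw d w a y) = (\<Sum>k<d. w k * y k - 2 * (hh d w y - a) * (w k)^2)"
    unfolding hh_def reflw_def by (intro sum.cong) (auto simp: power2_eq_square algebra_simps)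
  also have "\<dots> = hh d w y - 2 * (hh d w y - a) * (\<Sum>k<d. (w k)^2)"
    by (simp add: sum_subtractf sum_distrib_left hh_def)
  finally show ?thesis using w by simp
qed

lemma sq_refl:
  assumes w: "(\<Sum>k<d. (w k)^2) = 1"
  shows "(\<Sum>k<d. (reflw d w a y k - x k)^2) = (\<Sum>k<d. (y k - x k)^2) + 4 * (hh d w y - a) * (hh d w x - a)"
proof -
  define c where "c = hh d w y - a"
  have "(\<Sum>k<d. (reflw d w a y k - x k)^2) = (\<Sum>k<d. (y k - x k)^2 - 4 * c * (w k * y k - w k * x k) + 4 * c^2 * (w k)^2)"
    unfolding reflw_def c_def by (intro sum.cong) (auto simp: power2_eq_square algebra_simps)
  also have "\<dots> = (\<Sum>k<d. (y k - x k)^2) - 4 * c * (hh d w y - hh d w x) + 4 * c^2 * (\<Sum>k<d. (w k)^2)"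
  proof -
    have e: "(\<Sum>k<d. 4 * c * (w k * y k - w k * x k)) = 4 * c * (hh d w y - hh d w x)"
      by (simp add: hh_def sum_subtractf sum_distrib_left[symmetric])
    show ?thesis by (simp add: sum.distrib sum_subtractf sum_distrib_left e)
  qed
  also have "\<dots> = (\<Sum>k<d. (y k - x k)^2) + 4 * (hh d w y - a) * (hh d w x - a)"
    using w by (simp add: c_def power2_eq_square algebra_simps)
  finally show ?thesis .
qed

lemma refl_le:
  assumes w: "(\<Sum>k<d. (w k)^2) = 1"
    and A: "A \<in> sets (LL d)" and B: "B \<in> sets (LL d)" and AS: "A \<subseteq> space (LL d)"
    and AB: "\<And>y. y \<in> A \<Longrightarrow> reflw d w a y \<in> B"
  shows "emeasure (LL d) A \<le> emeasure (LL d) B"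
proof -
  have "A \<subseteq> reflw d w a -` B \<inter> space (LL d)" using AS AB by auto
  then have "emeasure (LL d) A \<le> emeasure (LL d) (reflw d w a -` B \<inter> space (LL d))"
    by (rule emeasure_mono) (use refl_scaled[OF w] B in \<open>auto simp: scaled_def intro: measurable_sets\<close>)
  also have "\<dots> = emeasure (LL d) B"
    using refl_scaled[OF w, of a] B by (simp add: scaled_def)
  finally show ?thesis .
qed

lemma unit_ball_iff: "y \<in> unit_ball_d d \<longleftrightarrow> y \<in> space (LL d) \<and> (\<Sum>k<d. (y k)^2) \<le> 1"
  by (simp add: unit_ball_d_def space_LL)

lemma dist_le_iff: "dist_d d y x \<le> r \<longleftrightarrow> (\<Sum>k<d. (y k - x k)^2) \<le> r^2" if "r \<ge> 0"
  using that unfolding dist_d_def by (subst real_sqrt_le_iff') (auto intro: sum_nonneg)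

lemma G_ineq:
  assumes w: "(\<Sum>k<d. (w k)^2) = 1" and r: "r \<ge> 0"
  shows "emeasure (LL d) (Ap d w r x) \<le> emeasure (LL d) (Bs d w r x) + emeasure (LL d) (Am d w r x)"
proof (cases "hh d w x \<ge> 0")
  case True
  define t where "t = hh d w x"
  define A1 where "A1 = {y \<in> Ap d w r x. hh d w y > t}"
  define P where "P = {y \<in> space (LL d). hh d w y = t}"
  have A1m: "A1 \<in> sets (LL d)"
  proof -
    have "A1 = Ap d w r x \<inter> {y \<in> space (LL d). hh d w y > t}"
      using Nb_space by (auto simp: A1_def Ap_def)
    also have "\<dots> \<in> sets (LL d)" by measurable
    finally show ?thesis .
  qed
  have Pm: "P \<in> sets (LL d)" unfolding P_def by measurable
  have P0: "emeasure (LL d) P = 0" unfolding P_def by (rule hyperplane_null[OF w])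
  have "Ap d w r x \<subseteq> A1 \<union> P"
    using Nb_space by (force simp: A1_def P_def Ap_def t_def)
  then have "emeasure (LL d) (Ap d w r x) \<le> emeasure (LL d) (A1 \<union> P)"
    by (intro emeasure_mono) (use A1m Pm in auto)
  also have "\<dots> \<le> emeasure (LL d) A1 + emeasure (LL d) P"
    by (rule emeasure_subadditive) (use A1m Pm in auto)
  also have "emeasure (LL d) A1 \<le> emeasure (LL d) (Bs d w r x)"
  proof (rule refl_le[OF w A1m Bs_sets, where a=t])
    show "A1 \<subseteq> space (LL d)" using Nb_space by (auto simp: A1_def Ap_def)
    fix y assume y: "y \<in> A1"
    then have ys: "y \<in> space (LL d)" "(\<Sum>k<d. (y k)^2) \<le> 1" "(\<Sum>k<d. (y k - x k)^2) \<le> r^2" "hh d w y > t"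
      using r by (auto simp: A1_def Ap_def Nb_def unit_ball_iff dist_le_iff)
    have "hh d w (reflw d w t y) < t" using hh_refl[OF w] ys by simp
    moreover have "(\<Sum>k<d. (reflw d w t y k - x k)^2) \<le> r^2"
      using sq_refl[OF w, of t y x] ys by (simp add: t_def)
    moreover have "(\<Sum>k<d. (reflw d w t y k)^2) \<le> 1"
    proof -
      have "(\<Sum>k<d. (reflw d w t y k - 0)^2) = (\<Sum>k<d. (y k - 0)^2) + 4 * (hh d w y - t) * (hh d w (\<lambda>_. 0) - t)"
        by (rule sq_refl[OF w])
      moreover have "hh d w (\<lambda>_. 0) = 0" by (simp add: hh_def)
      moreover have "4 * (hh d w y - t) * (0 - t) \<le> 0"
        using ys True by (simp add: t_def mult_nonneg_nonpos)
      ultimately show ?thesis using ys by simp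
    qed
    ultimately show "reflw d w t y \<in> Bs d w r x"
      using refl_space[OF ys(1)] r by (simp add: Bs_def Nb_def unit_ball_iff dist_le_iff t_def)
  qed
  finally show ?thesis using P0 by (simp add: add_increasing2)
next
  case False
  define t where "t = hh d w x"
  define A1 where "A1 = {y \<in> Ap d w r x. hh d w y > 0}"
  define P where "P = {y \<in> space (LL d). hh d w y = 0}"
  define Ng where "Ng = {y \<in> Nb d r x. hh d w y < 0}"
  have A1m: "A1 \<in> sets (LL d)"
  proof -
    have "A1 = Ap d w r x \<inter> {y \<in> space (LL d). hh d w y > 0}"
      using Nb_space by (auto simp: A1_def Ap_def)
    also have "\<dots> \<in> sets (LL d)" by measurable
    finally show ?thesis .
  qed
  have Ngm: "Ng \<in> sets (LL d)" unfolding Ng_def by (rule sub_Nb_sets) measurable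
  have Pm: "P \<in> sets (LL d)" unfolding P_def by measurable
  have P0: "emeasure (LL d) P = 0" unfolding P_def by (rule hyperplane_null[OF w])
  have "Ap d w r x \<subseteq> A1 \<union> P"
    using Nb_space by (force simp: A1_def P_def Ap_def)
  then have "emeasure (LL d) (Ap d w r x) \<le> emeasure (LL d) (A1 \<union> P)"
    by (intro emeasure_mono) (use A1m Pm in auto)
  also have "\<dots> \<le> emeasure (LL d) A1 + emeasure (LL d) P"
    by (rule emeasure_subadditive) (use A1m Pm in auto)
  also have "emeasure (LL d) A1 \<le> emeasure (LL d) Ng"
  proof (rule refl_le[OF w A1m Ngm, where a=0])
    show "A1 \<subseteq> space (LL d)" using Nb_space by (auto simp: A1_def Ap_def)
    fix y assume y: "y \<in> A1"
    then have ys: "y \<in> space (LL d)" "(\<Sum>k<d. (y k)^2) \<le> 1" "(\<Sum>k<d. (y k - x k)^2) \<le> r^2" "hh d w y > 0"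
      using r by (auto simp: A1_def Ap_def Nb_def unit_ball_iff dist_le_iff)
    have "hh d w (reflw d w 0 y) < 0" using hh_refl[OF w] ys by simp
    moreover have "(\<Sum>k<d. (reflw d w 0 y k - x k)^2) \<le> r^2"
    proof -
      have "4 * (hh d w y - 0) * (hh d w x - 0) \<le> 0"
        using ys False by (simp add: mult_nonneg_nonpos)
      then show ?thesis using sq_refl[OF w, of 0 y x] ys by (simp add: mult.commute mult.left_commute)
    qed
    moreover have "(\<Sum>k<d. (reflw d w 0 y k)^2) \<le> 1"
    proof -
      have "(\<Sum>k<d. (reflw d w 0 y k - 0)^2) = (\<Sum>k<d. (y k - 0)^2) + 4 * (hh d w y - 0) * (hh d w (\<lambda>_. 0) - 0)"
        by (rule sq_refl[OF w])
      moreover have "hh d w (\<lambda>_. 0) = 0" by (simp add: hh_def)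
      ultimately show ?thesis using ys by simp
    qed
    ultimately show "reflw d w 0 y \<in> Ng"
      using refl_space[OF ys(1)] r by (simp add: Ng_def Nb_def unit_ball_iff dist_le_iff)
  qed
  also have "Ng = Bs d w r x \<union> Am d w r x"
    by (auto simp: Ng_def Bs_def Am_def) (use False in auto)
  also have "emeasure (LL d) (Bs d w r x \<union> Am d w r x) \<le> emeasure (LL d) (Bs d w r x) + emeasure (LL d) (Am d w r x)"
    by (rule emeasure_subadditive) auto
  finally show ?thesis using P0 by simp
qed




lemma L2_diff_tri:
  "L2_set (\<lambda>k. a k - c k) A \<le> L2_set (\<lambda>k. a k - b k) A + L2_set (\<lambda>k. b k - c k) A"
  using L2_set_triangle_ineq[of "\<lambda>k. a k - b k" "\<lambda>k. b k - c k" A] by simp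

lemma L2_CS: "(\<Sum>k\<in>A. f k * g k) \<le> L2_set f A * L2_set g A"
proof -
  have "(\<Sum>k\<in>A. f k * g k) \<le> (\<Sum>k\<in>A. \<bar>f k\<bar> * \<bar>g k\<bar>)"
    by (intro sum_mono) (simp add: abs_mult[symmetric])
  also have "\<dots> \<le> L2_set f A * L2_set g A" by (rule L2_set_mult_ineq)
  finally show ?thesis .
qed

lemma L2_le1: "(\<Sum>k\<in>A. (f k)^2) \<le> 1 \<Longrightarrow> L2_set f A \<le> 1"
  unfolding L2_set_def by simp

lemma ball_sub_generic:
  assumes w: "(\<Sum>k<d. (w k)^2) = 1" and x: "x \<in> unit_ball_d d"
    and lam: "0 \<le> lam" "lam \<le> 1" and bet: "0 \<le> bet" and \<rho>: "0 \<le> \<rho>"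
    and a: "\<rho> + (1 - lam) + bet \<le> r"
    and b: "lam * hh d w x - bet + \<rho> < hh d w x"
    and c: "sqrt (lam^2 * (\<Sum>k<d. (x k)^2) - 2 * lam * bet * hh d w x + bet^2) + \<rho> \<le> 1"
  shows "ballv d (\<lambda>k. lam * x k - bet * w k) \<rho> \<subseteq> Bs d w r x"
proof
  fix y assume y: "y \<in> ballv d (\<lambda>k. lam * x k - bet * w k) \<rho>"
  define z where "z = (\<lambda>k. lam * x k - bet * w k)"
  define t where "t = hh d w x"
  have ys: "y \<in> space (LL d)" and yz: "L2_set (\<lambda>k. y k - z k) {..<d} \<le> \<rho>"
    using y by (auto simp: ballv_def z_def dist_L2)
  have Lw: "L2_set w {..<d} = 1" using w by (simp add: L2_set_def)
  have Lx: "L2_set x {..<d} \<le> 1" using x by (intro L2_le1) (simp add: unit_ball_d_def)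
  have hz: "hh d w z = lam * t - bet"
  proof -
    have "hh d w z = lam * t - bet * (\<Sum>k<d. (w k)^2)"
      unfolding hh_def z_def t_def
      by (simp add: algebra_simps power2_eq_square sum_subtractf sum_distrib_left)
    then show ?thesis using w by simp
  qed
  have "hh d w y = hh d w z + (\<Sum>k<d. w k * (y k - z k))"
    unfolding hh_def by (simp add: algebra_simps sum.distrib[symmetric])
  also have "(\<Sum>k<d. w k * (y k - z k)) \<le> L2_set w {..<d} * L2_set (\<lambda>k. y k - z k) {..<d}"
    by (rule L2_CS)
  also have "\<dots> \<le> \<rho>" using Lw yz by simp
  finally have hy: "hh d w y < t" using hz b by (simp add: t_def)
  have zx: "L2_set (\<lambda>k. z k - x k) {..<d} \<le> (1 - lam) + bet"
  proof -
    have "L2_set (\<lambda>k. z k - x k) {..<d} = L2_set (\<lambda>k. (1 - lam) * x k + bet * w k) {..<d}"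
      unfolding L2_set_def z_def by (intro arg_cong[where f=sqrt] sum.cong) (auto simp: power2_eq_square algebra_simps)
    also have "\<dots> \<le> L2_set (\<lambda>k. (1 - lam) * x k) {..<d} + L2_set (\<lambda>k. bet * w k) {..<d}"
      by (rule L2_set_triangle_ineq)
    also have "\<dots> = (1 - lam) * L2_set x {..<d} + bet * L2_set w {..<d}"
      using lam bet by (simp add: L2_set_right_distrib)
    also have "\<dots> \<le> (1 - lam) + bet" using Lx Lw lam by (simp add: mult_left_le)
    finally show ?thesis .
  qed
  have dy: "L2_set (\<lambda>k. y k - x k) {..<d} \<le> r"
    using L2_diff_tri[of y x "{..<d}" z] yz zx a by linarith
  have z2: "(\<Sum>k<d. (z k - 0)^2) = lam^2 * (\<Sum>k<d. (x k)^2) - 2 * lam * bet * t + bet^2"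
  proof -
    have "(\<Sum>k<d. (z k - 0)^2) = (\<Sum>k<d. lam^2 * (x k)^2 - 2 * lam * bet * (w k * x k) + bet^2 * (w k)^2)"
      unfolding z_def by (intro sum.cong) (auto simp: power2_eq_square algebra_simps)
    also have "\<dots> = lam^2 * (\<Sum>k<d. (x k)^2) - 2 * lam * bet * t + bet^2 * (\<Sum>k<d. (w k)^2)"
      by (simp add: sum.distrib sum_subtractf sum_distrib_left t_def hh_def)
    finally show ?thesis using w by simp
  qed
  have "L2_set (\<lambda>k. y k - 0) {..<d} \<le> L2_set (\<lambda>k. y k - z k) {..<d} + L2_set (\<lambda>k. z k - 0) {..<d}"
    by (rule L2_diff_tri)
  also have "L2_set (\<lambda>k. z k - 0) {..<d} = sqrt (lam^2 * (\<Sum>k<d. (x k)^2) - 2 * lam * bet * t + bet^2)"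
    unfolding L2_set_def using z2 by simp
  finally have "L2_set (\<lambda>k. y k - 0) {..<d} \<le> 1" using yz c by (simp add: t_def)
  then have y1: "(\<Sum>k<d. (y k)^2) \<le> 1" unfolding L2_set_def by simp
  show "y \<in> Bs d w r x"
    using ys y1 dy hy by (simp add: Bs_def Nb_def unit_ball_iff dist_L2 t_def)
qed

lemma hh_bound: "x \<in> unit_ball_d d \<Longrightarrow> (\<Sum>k<d. (w k)^2) = 1 \<Longrightarrow> \<bar>hh d w x\<bar> \<le> 1"
proof -
  assume x: "x \<in> unit_ball_d d" and w: "(\<Sum>k<d. (w k)^2) = 1"
  have "\<bar>hh d w x\<bar> \<le> (\<Sum>k<d. \<bar>w k\<bar> * \<bar>x k\<bar>)" unfolding hh_def
    by (rule order_trans[OF sum_abs]) (simp add: abs_mult)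
  also have "\<dots> \<le> L2_set w {..<d} * L2_set x {..<d}" by (rule L2_set_mult_ineq)
  also have "\<dots> \<le> 1 * 1"
    using w x by (intro mult_mono L2_le1) (auto simp: unit_ball_d_def)
  finally show ?thesis by simp
qed

lemma Bs_contains_ball:
  assumes w: "(\<Sum>k<d. (w k)^2) = 1" and x: "x \<in> unit_ball_d d" and r: "0 < r" "r \<le> 1/2"
    and tb: "hh d w x \<ge> -1/2"
  shows "\<exists>z. ballv d z (r/16) \<subseteq> Bs d w r x"
proof -
  define t where "t = hh d w x"
  define S where "S = (\<Sum>k<d. (x k)^2)"
  have S0: "0 \<le> S" unfolding S_def by (rule sum_nonneg) simp
  have S1: "S \<le> 1" using x unfolding S_def unit_ball_iff by blast
  have True: "t \<ge> -1/2" using tb by (simp add: t_def)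
  have "ballv d (\<lambda>k. (1 - r/4) * x k - (r/4) * w k) (r/16) \<subseteq> Bs d w r x"
  proof (rule ball_sub_generic[OF w x])
    show "(1 - r/4) * hh d w x - r/4 + r/16 < hh d w x"
    proof -
      have "(r/4) * (-t) \<le> (r/4) * (1/2)" using True r by (intro mult_left_mono) auto
      moreover have "(1 - r/4) * t = t + (r/4) * (-t)" by (simp add: algebra_simps)
      ultimately show ?thesis using r by (simp add: t_def[symmetric])
    qed
    have inner: "(1 - r/4)^2 * S - 2 * (1 - r/4) * (r/4) * t + (r/4)^2 \<le> (1 - r/16)^2"
    proof -
      have "(1 - r/4)^2 * S \<le> (1 - r/4)^2" by (rule mult_left_le[OF S1]) simp
      moreover have "- 2 * (1 - r/4) * (r/4) * t \<le> 2 * (1 - r/4) * (r/4) * (1/2)"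
      proof -
        have "0 \<le> 2 * (1 - r/4) * (r/4)" using r by simp
        then have "(2 * (1 - r/4) * (r/4)) * (-t) \<le> (2 * (1 - r/4) * (r/4)) * (1/2)"
          using True by (intro mult_left_mono) auto
        moreover have "- 2 * (1 - r/4) * (r/4) * t = (2 * (1 - r/4) * (r/4)) * (-t)" by (simp add: algebra_simps)
        ultimately show ?thesis by linarith
      qed
      moreover have "(1 - r/4)^2 + 2 * (1 - r/4) * (r/4) * (1/2) + (r/4)^2 \<le> (1 - r/16)^2"
      proof -
        have rr: "r * r \<le> r * (1/2)" using r by (intro mult_left_mono) auto
        have e1: "(1 - r/4)^2 + 2 * (1 - r/4) * (r/4) * (1/2) + (r/4)^2 = 1 - r/4 + (r*r)/16"
          by (simp add: power2_eq_square field_simps)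
        have e2: "(1 - r/16)^2 = 1 - r/8 + (r*r)/256" by (simp add: power2_eq_square field_simps)
        show ?thesis unfolding e1 e2 using rr r by linarith
      qed
      ultimately show ?thesis by linarith
    qed
    have "sqrt ((1 - r/4)^2 * S - 2 * (1 - r/4) * (r/4) * t + (r/4)^2) \<le> sqrt ((1 - r/16)^2)"
      using inner by (rule real_sqrt_le_mono)
    also have "\<dots> = 1 - r/16" using r by simp
    finally show "sqrt ((1 - r/4)^2 * (\<Sum>k<d. (x k)^2) - 2 * (1 - r/4) * (r/4) * hh d w x + (r/4)^2) + r/16 \<le> 1"
      by (simp add: S_def t_def)
  qed (insert r, simp_all)
  then show ?thesis by blast
qed

lemma Nb_contains_ball:
  assumes x: "x \<in> unit_ball_d d" and r: "0 < r" "r \<le> 1/2"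
  shows "ballv d (\<lambda>k. (1 - r/2) * x k) (r/16) \<subseteq> Nb d r x"
proof
  fix y assume y: "y \<in> ballv d (\<lambda>k. (1 - r/2) * x k) (r/16)"
  define z where "z = (\<lambda>k. (1 - r/2) * x k)"
  have ys: "y \<in> space (LL d)" and yz: "L2_set (\<lambda>k. y k - z k) {..<d} \<le> r/16"
    using y by (auto simp: ballv_def z_def dist_L2)
  have Lx: "L2_set x {..<d} \<le> 1" using x by (intro L2_le1) (simp add: unit_ball_d_def)
  have zx: "L2_set (\<lambda>k. z k - x k) {..<d} \<le> r/2"
  proof -
    have "L2_set (\<lambda>k. z k - x k) {..<d} = L2_set (\<lambda>k. (r/2) * x k) {..<d}"
      unfolding L2_set_def z_def by (intro arg_cong[where f=sqrt] sum.cong) (auto simp: power2_eq_square algebra_simps)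
    also have "\<dots> = (r/2) * L2_set x {..<d}" by (rule L2_set_right_distrib[symmetric]) (use r in simp)
    also have "\<dots> \<le> r/2" using Lx r by (simp add: mult_left_le)
    finally show ?thesis .
  qed
  have z0: "L2_set (\<lambda>k. z k - 0) {..<d} \<le> 1 - r/2"
  proof -
    have "L2_set (\<lambda>k. z k - 0) {..<d} = (1 - r/2) * L2_set x {..<d}"
      using r by (simp add: z_def L2_set_right_distrib)
    also have "\<dots> \<le> 1 - r/2" using Lx r by (simp add: mult_left_le)
    finally show ?thesis .
  qed
  have dy: "L2_set (\<lambda>k. y k - x k) {..<d} \<le> r"
    using L2_diff_tri[of y x "{..<d}" z] yz zx r by linarith
  have "L2_set (\<lambda>k. y k - 0) {..<d} \<le> 1"
    using L2_diff_tri[of y "\<lambda>_. 0" "{..<d}" z] yz z0 r by linarith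
  then have y1: "(\<Sum>k<d. (y k)^2) \<le> 1" unfolding L2_set_def by simp
  show "y \<in> Nb d r x"
    using ys y1 dy by (simp add: Nb_def unit_ball_iff dist_L2)
qed

lemma hh_lipschitz:
  assumes w: "(\<Sum>k<d. (w k)^2) = 1"
  shows "hh d w y - hh d w x \<le> dist_d d y x"
proof -
  have "hh d w y - hh d w x = (\<Sum>k<d. w k * (y k - x k))"
    unfolding hh_def by (simp add: algebra_simps sum_subtractf)
  also have "\<dots> \<le> L2_set w {..<d} * L2_set (\<lambda>k. y k - x k) {..<d}" by (rule L2_CS)
  also have "L2_set w {..<d} = 1" using w by (simp add: L2_set_def)
  finally show ?thesis by (simp add: dist_L2)
qed

lemma Ap_empty:
  assumes w: "(\<Sum>k<d. (w k)^2) = 1" and t: "hh d w x < - r"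
  shows "Ap d w r x = {}"
proof (rule ccontr)
  assume "Ap d w r x \<noteq> {}"
  then obtain y where y: "y \<in> Ap d w r x" by blast
  then have "hh d w y \<ge> 0" "dist_d d y x \<le> r" by (auto simp: Ap_def Nb_def)
  moreover have "hh d w y - hh d w x \<le> dist_d d y x" by (rule hh_lipschitz[OF w])
  ultimately show False using t by linarith
qed

lemma emeasure_Bs_lower:
  assumes w: "(\<Sum>k<d. (w k)^2) = 1" and x: "x \<in> unit_ball_d d" and r: "0 < r" "r \<le> 1/2"
    and tb: "hh d w x \<ge> -1/2"
  shows "ennreal (unit_ball_vol (real d) * (r/16) ^ d) \<le> emeasure (LL d) (Bs d w r x)"
proof -
  obtain z where z: "ballv d z (r/16) \<subseteq> Bs d w r x" using Bs_contains_ball[OF assms] by blast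
  have "ennreal (unit_ball_vol (real d) * (r/16) ^ d) = emeasure (LL d) (ballv d z (r/16))"
    using r by (simp add: emeasure_ballv)
  also have "\<dots> \<le> emeasure (LL d) (Bs d w r x)" by (rule emeasure_mono[OF z]) simp
  finally show ?thesis .
qed

lemma emeasure_Nb_lower:
  assumes x: "x \<in> unit_ball_d d" and r: "0 < r" "r \<le> 1/2"
  shows "ennreal (unit_ball_vol (real d) * (r/16) ^ d) \<le> emeasure (LL d) (Nb d r x)"
proof -
  have "ennreal (unit_ball_vol (real d) * (r/16) ^ d) = emeasure (LL d) (ballv d (\<lambda>k. (1 - r/2) * x k) (r/16))"
    using r by (simp add: emeasure_ballv)
  also have "\<dots> \<le> emeasure (LL d) (Nb d r x)" by (rule emeasure_mono[OF Nb_contains_ball[OF assms]]) simp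
  finally show ?thesis .
qed

lemma emeasure_Nb_upper:
  assumes r: "0 < r"
  shows "emeasure (LL d) (Nb d r x) \<le> ennreal (unit_ball_vol (real d) * r ^ d)"
proof -
  have "Nb d r x \<subseteq> ballv d x r" using Nb_space by (auto simp: Nb_def ballv_def)
  then have "emeasure (LL d) (Nb d r x) \<le> emeasure (LL d) (ballv d x r)" by (rule emeasure_mono) simp
  also have "\<dots> = ennreal (unit_ball_vol (real d) * r ^ d)" using r by (simp add: emeasure_ballv)
  finally show ?thesis .
qed




definition Zf :: "nat \<Rightarrow> real \<Rightarrow> (nat \<Rightarrow> real) \<Rightarrow> (nat \<Rightarrow> real) \<Rightarrow> (nat \<Rightarrow> real) \<times> bool \<Rightarrow> real" where
  "Zf d r w x p = (if dist_d d (fst p) x \<le> r then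
      (if hh d w (fst p) < hh d w x then 1
       else - real_of_int (if snd p then - target d w (fst p) else target d w (fst p))) else 0)"

lemma comp_coord:
  assumes "f \<in> M \<rightarrow>\<^sub>M LL d" "i \<in> {..<d}"
  shows "(\<lambda>x. f x i) \<in> borel_measurable M"
  using measurable_comp[OF assms(1) measurable_component_singleton[OF assms(2)]] by (simp add: comp_def)

lemma dist_d_meas2[measurable]:
  assumes [measurable]: "f \<in> M \<rightarrow>\<^sub>M LL d" "g \<in> M \<rightarrow>\<^sub>M LL d"
  shows "(\<lambda>z. dist_d d (f z) (g z)) \<in> borel_measurable M"
  unfolding dist_d_def by measurable (auto intro: comp_coord[OF assms(1)] comp_coord[OF assms(2)])

lemma hh_meas2[measurable]:
  assumes [measurable]: "f \<in> M \<rightarrow>\<^sub>M LL d"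
  shows "(\<lambda>z. hh d w (f z)) \<in> borel_measurable M"
  unfolding hh_def by measurable (auto intro: comp_coord)

lemma target_meas2[measurable]:
  assumes [measurable]: "f \<in> M \<rightarrow>\<^sub>M LL d"
  shows "(\<lambda>z. real_of_int (target d w (f z))) \<in> borel_measurable M"
proof -
  have "(\<lambda>z. real_of_int (target d w (f z))) = (\<lambda>z. if hh d w (f z) \<ge> 0 then 1 else -1)"
    by (auto simp: target_def hh_def fun_eq_iff)
  also have "\<dots> \<in> borel_measurable M" by measurable
  finally show ?thesis .
qed

lemma Zf_meas2[measurable]:
  assumes [measurable]: "f \<in> M \<rightarrow>\<^sub>M LL d" "g \<in> M \<rightarrow>\<^sub>M LL d" "b \<in> M \<rightarrow>\<^sub>M count_space UNIV"
  shows "(\<lambda>z. Zf d r w (f z) (g z, b z)) \<in> borel_measurable M"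
proof -
  have "(\<lambda>z. Zf d r w (f z) (g z, b z)) = (\<lambda>z. if dist_d d (g z) (f z) \<le> r then
      (if hh d w (g z) < hh d w (f z) then 1
       else (if b z then real_of_int (target d w (g z)) else - real_of_int (target d w (g z)))) else 0)"
    by (auto simp: Zf_def fun_eq_iff)
  also have "\<dots> \<in> borel_measurable M" by measurable
  finally show ?thesis .
qed




lemma emeasure_U: "emeasure (LL d) (unit_ball_d d) = ennreal (unit_ball_vol (real d))"
  using emeasure_ballv[of 1 d "\<lambda>_. 0"] by (simp add: unit_ball_ballv)

lemma V_pos: "unit_ball_vol (real d) > 0" by simp

lemma fin_sub_U:
  assumes "A \<subseteq> unit_ball_d d"
  shows "emeasure (LL d) A \<noteq> \<top>"
proof -
  have "emeasure (LL d) A \<le> emeasure (LL d) (unit_ball_d d)" by (rule emeasure_mono[OF assms]) simp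
  also have "\<dots> < \<top>" unfolding emeasure_U by simp
  finally show ?thesis by simp
qed

lemma em_real: "A \<subseteq> unit_ball_d d \<Longrightarrow> emeasure (LL d) A = ennreal (measure (LL d) A)"
  using fin_sub_U emeasure_eq_ennreal_measure by metis

lemma Nb_sub_U: "Nb d r x \<subseteq> unit_ball_d d" by (auto simp: Nb_def)
lemma Bs_sub: "Bs d w r x \<subseteq> unit_ball_d d" by (auto simp: Bs_def Nb_def)
lemma Ap_sub: "Ap d w r x \<subseteq> unit_ball_d d" by (auto simp: Ap_def Nb_def)
lemma Am_sub: "Am d w r x \<subseteq> unit_ball_d d" by (auto simp: Am_def Nb_def)

lemma Nb_partition: "Nb d r x = Bs d w r x \<union> Ap d w r x \<union> Am d w r x"
  by (auto simp: Nb_def Bs_def Ap_def Am_def)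

lemma measure_Nb_split:
  "measure (LL d) (Nb d r x) = measure (LL d) (Bs d w r x) + measure (LL d) (Ap d w r x) + measure (LL d) (Am d w r x)"
proof -
  have d1: "(Bs d w r x \<union> Ap d w r x) \<inter> Am d w r x = {}" by (auto simp: Bs_def Ap_def Am_def)
  have d2: "Bs d w r x \<inter> Ap d w r x = {}" by (auto simp: Bs_def Ap_def)
  have f1: "emeasure (LL d) (Bs d w r x \<union> Ap d w r x) \<noteq> \<infinity>"
    using fin_sub_U[of "Bs d w r x \<union> Ap d w r x" d] Bs_sub Ap_sub by auto
  have f2: "emeasure (LL d) (Am d w r x) \<noteq> \<infinity>" using fin_sub_U[OF Am_sub] by simp
  have f3: "emeasure (LL d) (Bs d w r x) \<noteq> \<infinity>" using fin_sub_U[OF Bs_sub] by simp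
  have f4: "emeasure (LL d) (Ap d w r x) \<noteq> \<infinity>" using fin_sub_U[OF Ap_sub] by simp
  have s1: "Bs d w r x \<union> Ap d w r x \<in> sets (LL d)" by simp
  have "measure (LL d) (Bs d w r x \<union> Ap d w r x \<union> Am d w r x) =
        measure (LL d) (Bs d w r x \<union> Ap d w r x) + measure (LL d) (Am d w r x)"
    by (rule measure_Union[OF f1 f2 s1 Am_sets d1])
  also have "measure (LL d) (Bs d w r x \<union> Ap d w r x) = measure (LL d) (Bs d w r x) + measure (LL d) (Ap d w r x)"
    by (rule measure_Union[OF f3 f4 Bs_sets Ap_sets d2])
  finally show ?thesis by (simp add: Nb_partition[symmetric])
qed

lemma key_geo:
  assumes w: "(\<Sum>k<d. (w k)^2) = 1" and x: "x \<in> unit_ball_d d" and r: "0 < r" "r \<le> 1/2"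
    and eta: "0 < \<eta>" "\<eta> < 1/2"
  shows "measure (LL d) (Bs d w r x) - (1 - 2*\<eta>) * (measure (LL d) (Ap d w r x) - measure (LL d) (Am d w r x))
     \<ge> 2 * min \<eta> (1/2 - \<eta>) * (unit_ball_vol (real d) * (r/16)^d)"
proof -
  define m1 where "m1 = measure (LL d) (Bs d w r x)"
  define m2 where "m2 = measure (LL d) (Ap d w r x)"
  define m3 where "m3 = measure (LL d) (Am d w r x)"
  define vb where "vb = unit_ball_vol (real d) * (r/16)^d"
  define \<phi> where "\<phi> = min \<eta> (1/2 - \<eta>)"
  have vb0: "0 \<le> vb" using r by (simp add: vb_def)
  have m0: "0 \<le> m1" "0 \<le> m2" "0 \<le> m3" by (auto simp: m1_def m2_def m3_def)
  have ph: "2 * \<phi> \<le> 2 * \<eta>" "2 * \<phi> \<le> 1 - 2 * \<eta>" "0 \<le> \<phi>" using eta by (auto simp: \<phi>_def min_def)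
  have "m1 - (1 - 2*\<eta>) * (m2 - m3) \<ge> 2 * \<phi> * vb"
  proof (cases "hh d w x \<ge> -1/2")
    case True
    have "ennreal m2 \<le> ennreal m1 + ennreal m3"
      using G_ineq[OF w, of r x] r by (simp add: m1_def m2_def m3_def em_real Bs_sub Ap_sub Am_sub)
    then have G: "m2 \<le> m1 + m3" using m0 by (simp add: ennreal_plus[symmetric] del: ennreal_plus)
    have "ennreal vb \<le> ennreal m1"
      using emeasure_Bs_lower[OF w x r True] by (simp add: vb_def m1_def em_real Bs_sub)
    then have B: "vb \<le> m1" using m0 by simp
    have "(1 - 2*\<eta>) * (m2 - m3) \<le> (1 - 2*\<eta>) * m1" using G eta by (intro mult_left_mono) auto
    then have "m1 - (1 - 2*\<eta>) * (m2 - m3) \<ge> 2 * \<eta> * m1" by (simp add: algebra_simps)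
    moreover have "2 * \<eta> * m1 \<ge> 2 * \<phi> * vb" using B ph m0 vb0 by (intro mult_mono) auto
    ultimately show ?thesis by linarith
  next
    case False
    then have "hh d w x < - r" using r by simp
    then have A0: "Ap d w r x = {}" by (rule Ap_empty[OF w])
    then have m2z: "m2 = 0" by (simp add: m2_def)
    have "ennreal vb \<le> ennreal (measure (LL d) (Nb d r x))"
      using emeasure_Nb_lower[OF x r] by (simp add: vb_def em_real Nb_sub_U)
    then have "vb \<le> measure (LL d) (Nb d r x)" by simp
    then have B: "vb \<le> m1 + m3" using measure_Nb_split[of d r x w] m2z by (simp add: m1_def m2_def m3_def)
    have "m1 - (1 - 2*\<eta>) * (m2 - m3) \<ge> (1 - 2*\<eta>) * (m1 + m3)"
    proof -
      have "(1 - 2*\<eta>) * m1 \<le> m1" using m0 eta by (simp add: mult_left_le_one_le)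
      then show ?thesis using m2z by (simp add: algebra_simps)
    qed
    moreover have "(1 - 2*\<eta>) * (m1 + m3) \<ge> 2 * \<phi> * vb" using B ph m0 vb0 by (intro mult_mono) auto
    ultimately show ?thesis by linarith
  qed
  then show ?thesis by (simp only: m1_def m2_def m3_def vb_def \<phi>_def)
qed




lemma exp_neg_bound:
  fixes x :: real assumes "0 \<le> x" "x \<le> 1"
  shows "exp (-x) \<le> 1 - x + x^2"
proof -
  have q: "0 \<le> 1 - x + x^2" using assms by (simp add: power2_eq_square)
  have "1 \<le> (1 + x) * (1 - x + x^2)" using assms by (simp add: power2_eq_square algebra_simps)
  also have "\<dots> \<le> exp x * (1 - x + x^2)" by (rule mult_right_mono[OF exp_ge_add_one_self q])
  finally have "exp (-x) * 1 \<le> exp (-x) * (exp x * (1 - x + x^2))" by (intro mult_left_mono) auto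
  also have "\<dots> = 1 - x + x^2" by (simp add: exp_minus field_simps)
  finally show ?thesis by simp
qed

lemma exp_pos_bound:
  fixes x :: real assumes "0 \<le> x" "x \<le> 1"
  shows "exp x \<le> 1 + x + x^2"
  using exp_bound[OF assms] by simp

lemma real_ineq:
  fixes m0 m1 m2 m3 V r \<eta> \<phi> lam :: real
  assumes m: "0 \<le> m0" "0 \<le> m1" "0 \<le> m2" "0 \<le> m3"
    and sumV: "m0 + (m1 + m2 + m3) = V"
    and up: "m1 + m2 + m3 \<le> V * r^d"
    and key: "m1 - (1 - 2*\<eta>) * (m2 - m3) \<ge> 2 * \<phi> * (V * (r/16)^d)"
    and eta: "0 < \<eta>" "\<eta> < 1/2"
    and phi: "\<phi> = min \<eta> (1/2 - \<eta>)"
    and lam: "lam = \<phi> / 16^d"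
  shows "m0 + exp (-lam) * m1 + (\<eta> * exp (-lam) + (1 - \<eta>) * exp lam) * m2
          + (\<eta> * exp lam + (1 - \<eta>) * exp (-lam)) * m3 \<le> V * (1 - \<phi>^2 * (r/256)^d)"
proof -
  have ph: "0 \<le> \<phi>" "\<phi> \<le> 1" using eta phi by auto
  have "(1::real) \<le> 16^d" by simp
  then have "\<phi> \<le> 16^d" using ph by linarith
  then have l0: "0 \<le> lam" "lam \<le> 1" using ph lam by (auto simp: divide_le_eq)
  have e1: "exp (-lam) \<le> 1 - lam + lam^2" by (rule exp_neg_bound[OF l0])
  have e2: "exp lam \<le> 1 + lam + lam^2" by (rule exp_pos_bound[OF l0])
  have c1: "exp (-lam) * m1 \<le> (1 - lam + lam^2) * m1" by (rule mult_right_mono[OF e1 m(2)])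
  have c2: "(\<eta> * exp (-lam) + (1 - \<eta>) * exp lam) * m2 \<le> (1 + lam^2 + lam * (1 - 2*\<eta>)) * m2"
  proof (rule mult_right_mono[OF _ m(3)])
    have "\<eta> * exp (-lam) \<le> \<eta> * (1 - lam + lam^2)" using e1 eta by (intro mult_left_mono) auto
    moreover have "(1 - \<eta>) * exp lam \<le> (1 - \<eta>) * (1 + lam + lam^2)" using e2 eta by (intro mult_left_mono) auto
    ultimately show "\<eta> * exp (-lam) + (1 - \<eta>) * exp lam \<le> 1 + lam^2 + lam * (1 - 2*\<eta>)"
      by (simp add: algebra_simps)
  qed
  have c3: "(\<eta> * exp lam + (1 - \<eta>) * exp (-lam)) * m3 \<le> (1 + lam^2 - lam * (1 - 2*\<eta>)) * m3"
  proof (rule mult_right_mono[OF _ m(4)])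
    have "\<eta> * exp lam \<le> \<eta> * (1 + lam + lam^2)" using e2 eta by (intro mult_left_mono) auto
    moreover have "(1 - \<eta>) * exp (-lam) \<le> (1 - \<eta>) * (1 - lam + lam^2)" using e1 eta by (intro mult_left_mono) auto
    ultimately show "\<eta> * exp lam + (1 - \<eta>) * exp (-lam) \<le> 1 + lam^2 - lam * (1 - 2*\<eta>)"
      by (simp add: algebra_simps)
  qed
  define K where "K = m1 - (1 - 2*\<eta>) * (m2 - m3)"
  have sum_eq: "m0 + (1 - lam + lam^2) * m1 + (1 + lam^2 + lam * (1 - 2*\<eta>)) * m2 + (1 + lam^2 - lam * (1 - 2*\<eta>)) * m3
      = V + lam^2 * (m1 + m2 + m3) - lam * K"
    using sumV by (simp add: K_def algebra_simps)
  have t1: "lam^2 * (m1 + m2 + m3) \<le> lam^2 * (V * r^d)" using up by (intro mult_left_mono) auto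
  have t2: "lam * (2 * \<phi> * (V * (r/16)^d)) \<le> lam * K" using key l0 by (intro mult_left_mono) (auto simp: K_def)
  have fin: "V + lam^2 * (V * r^d) - lam * (2 * \<phi> * (V * (r/16)^d)) = V * (1 - \<phi>^2 * (r/256)^d)"
  proof -
    have a: "(r/16)^d = r^d / 16^d" by (simp add: power_divide)
    have b: "(r/256)^d = r^d / (16^d * 16^d)" by (simp add: power_divide flip: power_mult_distrib)
    show ?thesis unfolding lam a b by (simp add: power2_eq_square field_simps)
  qed
  show ?thesis using c1 c2 c3 sum_eq t1 t2 fin by linarith
qed




lemma prob_space_ub: "prob_space (uniform_ball d)"
proof -
  have p: "unit_ball_vol (real d) > 0" by (rule unit_ball_vol_pos) simp
  have q0: "unit_ball_vol (real d) \<noteq> 0" using p by linarith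
  have q: "ennreal (unit_ball_vol (real d)) \<noteq> 0" using p q0 by (simp del: unit_ball_vol_pos)
  show ?thesis unfolding uniform_ball_def
    by (rule prob_space_uniform_measure) (simp_all add: emeasure_U q)
qed

lemma sets_Mp: "sets (uniform_ball d \<Otimes>\<^sub>M measure_pmf (bernoulli_pmf \<eta>)) = sets (LL d \<Otimes>\<^sub>M count_space UNIV)"
  by (rule sets_pair_measure_cong) (simp_all add: uniform_ball_def)

lemma pair_ps: "pair_prob_space (uniform_ball d) (measure_pmf (bernoulli_pmf \<eta>))"
proof -
  interpret UB: prob_space "uniform_ball d" by (rule prob_space_ub)
  interpret B: prob_space "measure_pmf (bernoulli_pmf \<eta>)" by (rule prob_space_measure_pmf)
  show ?thesis by unfold_locales
qed

lemma Zf_meas_pair: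
  assumes x: "x \<in> space (LL d)"
  shows "(\<lambda>p. Zf d r w x p) \<in> borel_measurable (uniform_ball d \<Otimes>\<^sub>M measure_pmf (bernoulli_pmf \<eta>))"
proof -
  have "(\<lambda>p. Zf d r w ((\<lambda>_. x) p) (fst p, snd p)) \<in> borel_measurable (LL d \<Otimes>\<^sub>M count_space UNIV)"
    by (rule Zf_meas2) (use x in auto)
  then have "Zf d r w x \<in> borel_measurable (LL d \<Otimes>\<^sub>M count_space UNIV)" by simp
  then show ?thesis using measurable_cong_sets[OF sets_Mp[symmetric, of d \<eta>] refl] by blast
qed

lemma Zf_meas_y:
  assumes x: "x \<in> space (LL d)"
  shows "(\<lambda>y. Zf d r w x (y, b)) \<in> borel_measurable (LL d)"
  by (rule Zf_meas2[where g="\<lambda>y. y" and b="\<lambda>_. b", simplified]) (use x in auto)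

lemma target_hh: "target d w y = (if hh d w y \<ge> 0 then 1 else -1)"
  by (simp add: target_def hh_def)

lemma per_x:
  assumes w: "(\<Sum>k<d. (w k)^2) = 1" and x: "x \<in> unit_ball_d d" and r: "0 < r" "r \<le> 1/2"
    and eta: "0 < \<eta>" "\<eta> < 1/2"
  shows "(\<integral>\<^sup>+ p. ennreal (exp (- (min \<eta> (1/2 - \<eta>) / 16^d) * Zf d r w x p))
            \<partial>(uniform_ball d \<Otimes>\<^sub>M measure_pmf (bernoulli_pmf \<eta>)))
         \<le> ennreal (1 - (min \<eta> (1/2 - \<eta>))^2 * (r/256)^d)"
proof -
  define \<phi> where "\<phi> = min \<eta> (1/2 - \<eta>)"
  define lam where "lam = \<phi> / 16^d"
  define V where "V = unit_ball_vol (real d)"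
  define U where "U = unit_ball_d d"
  interpret B: prob_space "measure_pmf (bernoulli_pmf \<eta>)" by (rule prob_space_measure_pmf)
  have ps: "pair_sigma_finite (uniform_ball d) (measure_pmf (bernoulli_pmf \<eta>))"
    using pair_ps unfolding pair_prob_space_def by blast
  have xs: "x \<in> space (LL d)" using x unit_ball_space by auto
  define Gr where "Gr y = \<eta> * exp (- lam * Zf d r w x (y, True)) + (1 - \<eta>) * exp (- lam * Zf d r w x (y, False))" for y
  have Grm: "Gr \<in> borel_measurable (LL d)"
    unfolding Gr_def using Zf_meas_y[OF xs] by measurable
  have fm: "(\<lambda>p. ennreal (exp (- lam * Zf d r w x p))) \<in> borel_measurable (uniform_ball d \<Otimes>\<^sub>M measure_pmf (bernoulli_pmf \<eta>))"
    using Zf_meas_pair[OF xs] by measurable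
  have "(\<integral>\<^sup>+ p. ennreal (exp (- lam * Zf d r w x p)) \<partial>(uniform_ball d \<Otimes>\<^sub>M measure_pmf (bernoulli_pmf \<eta>)))
      = (\<integral>\<^sup>+ y. (\<integral>\<^sup>+ b. ennreal (exp (- lam * Zf d r w x (y, b))) \<partial>measure_pmf (bernoulli_pmf \<eta>)) \<partial>uniform_ball d)"
    by (rule sigma_finite_measure.nn_integral_fst[symmetric, OF prob_space_imp_sigma_finite[OF prob_space_measure_pmf] fm])
  also have "\<dots> = (\<integral>\<^sup>+ y. ennreal (Gr y) \<partial>uniform_ball d)"
  proof (rule nn_integral_cong)
    fix y
    show "(\<integral>\<^sup>+ b. ennreal (exp (- lam * Zf d r w x (y, b))) \<partial>measure_pmf (bernoulli_pmf \<eta>)) = ennreal (Gr y)"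
      using eta by (simp add: Gr_def ennreal_plus ennreal_mult' mult.commute)
  qed
  also have "\<dots> = (\<integral>\<^sup>+ y. ennreal (Gr y) * indicator U y \<partial>LL d) / emeasure (LL d) U"
    unfolding uniform_ball_def U_def
    by (rule nn_integral_uniform_measure) (use Grm in auto)
  finally have step1: "(\<integral>\<^sup>+ p. ennreal (exp (- lam * Zf d r w x p)) \<partial>(uniform_ball d \<Otimes>\<^sub>M measure_pmf (bernoulli_pmf \<eta>)))
      = (\<integral>\<^sup>+ y. ennreal (Gr y) * indicator U y \<partial>LL d) / emeasure (LL d) U" .
  define c1 where "c1 = exp (- lam)"
  define c2 where "c2 = \<eta> * exp (- lam) + (1 - \<eta>) * exp lam"
  define c3 where "c3 = \<eta> * exp lam + (1 - \<eta>) * exp (- lam)"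
  define R0 where "R0 = U - Nb d r x"
  have R0m: "R0 \<in> sets (LL d)" unfolding R0_def U_def by measurable
  have ptw: "ennreal (Gr y) * indicator U y = ennreal c1 * indicator (Bs d w r x) y + ennreal c2 * indicator (Ap d w r x) y
      + ennreal c3 * indicator (Am d w r x) y + indicator R0 y" for y
  proof (cases "y \<in> U")
    case False
    then show ?thesis using Bs_sub[of d w r x] Ap_sub[of d w r x] Am_sub[of d w r x]
      by (auto simp: R0_def U_def indicator_def)
  next
    case yU: True
    show ?thesis
    proof (cases "y \<in> Nb d r x")
      case False
      then have "Zf d r w x (y, b) = 0" for b by (auto simp: Zf_def Nb_def yU[unfolded U_def])
      then have "Gr y = 1" by (simp add: Gr_def)
      then show ?thesis using False yU by (auto simp: R0_def Bs_def Ap_def Am_def indicator_def)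
    next
      case yN: True
      then have dy: "dist_d d y x \<le> r" by (simp add: Nb_def)
      have nR: "y \<notin> R0" using yN by (simp add: R0_def)
      show ?thesis
      proof (cases "hh d w y < hh d w x")
        case True
        then have "Zf d r w x (y, b) = 1" for b using dy by (simp add: Zf_def)
        then have "Gr y = c1" by (simp add: Gr_def c1_def algebra_simps)
        then show ?thesis using True yN yU nR by (auto simp: Bs_def Ap_def Am_def indicator_def)
      next
        case False
        show ?thesis
        proof (cases "hh d w y \<ge> 0")
          case True
          then have "target d w y = 1" by (simp add: target_hh)
          then have "Zf d r w x (y, True) = 1" "Zf d r w x (y, False) = -1"
            using dy False by (simp_all add: Zf_def)
          then have "Gr y = c2" by (simp add: Gr_def c2_def)
          then show ?thesis using True False yN yU nR by (auto simp: Bs_def Ap_def Am_def indicator_def)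
        next
          case F2: False
          then have "target d w y = -1" by (simp add: target_hh)
          then have "Zf d r w x (y, True) = -1" "Zf d r w x (y, False) = 1"
            using dy False by (simp_all add: Zf_def)
          then have "Gr y = c3" by (simp add: Gr_def c3_def)
          then show ?thesis using F2 False yN yU nR by (auto simp: Bs_def Ap_def Am_def indicator_def)
        qed
      qed
    qed
  qed
  have "(\<integral>\<^sup>+ y. ennreal (Gr y) * indicator U y \<partial>LL d) =
      (\<integral>\<^sup>+ y. ennreal c1 * indicator (Bs d w r x) y + ennreal c2 * indicator (Ap d w r x) y
      + ennreal c3 * indicator (Am d w r x) y + indicator R0 y \<partial>LL d)"
    by (simp add: ptw)
  also have "\<dots> = ennreal c1 * emeasure (LL d) (Bs d w r x) + ennreal c2 * emeasure (LL d) (Ap d w r x)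
      + ennreal c3 * emeasure (LL d) (Am d w r x) + emeasure (LL d) R0"
    using R0m by (simp add: nn_integral_add nn_integral_cmult_indicator)
  finally have int_eq: "(\<integral>\<^sup>+ y. ennreal (Gr y) * indicator U y \<partial>LL d) = ennreal c1 * emeasure (LL d) (Bs d w r x) + ennreal c2 * emeasure (LL d) (Ap d w r x)
      + ennreal c3 * emeasure (LL d) (Am d w r x) + emeasure (LL d) R0" .
  define m0 where "m0 = measure (LL d) R0"
  define m1 where "m1 = measure (LL d) (Bs d w r x)"
  define m2 where "m2 = measure (LL d) (Ap d w r x)"
  define m3 where "m3 = measure (LL d) (Am d w r x)"
  have R0s: "R0 \<subseteq> unit_ball_d d" by (auto simp: R0_def U_def)
  have cpos: "0 \<le> c1" "0 \<le> c2" "0 \<le> c3" using eta by (auto simp: c1_def c2_def c3_def)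
  have mpos: "0 \<le> m0" "0 \<le> m1" "0 \<le> m2" "0 \<le> m3" by (auto simp: m0_def m1_def m2_def m3_def)
  define S where "S = c1 * m1 + c2 * m2 + c3 * m3 + m0"
  have Spos: "0 \<le> S" using cpos mpos by (simp add: S_def)
  have int_eq2: "(\<integral>\<^sup>+ y. ennreal (Gr y) * indicator U y \<partial>LL d) = ennreal S"
    unfolding int_eq using cpos mpos
    by (simp add: em_real[OF Bs_sub] em_real[OF Ap_sub] em_real[OF Am_sub] em_real[OF R0s]
        m0_def m1_def m2_def m3_def S_def ennreal_plus[symmetric] ennreal_mult[symmetric] del: ennreal_plus)
  have Vp: "0 < V" unfolding V_def by (rule unit_ball_vol_pos) simp
  have mU: "measure (LL d) U = V" using emeasure_U[of d] Vp by (simp add: U_def V_def measure_def)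
  have "measure (LL d) U = m0 + measure (LL d) (Nb d r x)"
  proof -
    have "U = R0 \<union> Nb d r x" using Nb_sub_U[of d r x] by (auto simp: R0_def U_def)
    moreover have "measure (LL d) (R0 \<union> Nb d r x) = measure (LL d) R0 + measure (LL d) (Nb d r x)"
      by (rule measure_Union) (use fin_sub_U[OF R0s] fin_sub_U[OF Nb_sub_U] R0m in \<open>auto simp: R0_def\<close>)
    ultimately show ?thesis by (simp add: m0_def)
  qed
  then have sumV: "m0 + (m1 + m2 + m3) = V" using mU measure_Nb_split[of d r x w] by (simp add: m1_def m2_def m3_def)
  have "ennreal (measure (LL d) (Nb d r x)) \<le> ennreal (V * r^d)"
    using emeasure_Nb_upper[OF r(1), of d x] by (simp add: em_real[OF Nb_sub_U] V_def)
  then have nb: "measure (LL d) (Nb d r x) \<le> V * r^d" using Vp r by (subst (asm) ennreal_le_iff) auto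
  then have up: "m1 + m2 + m3 \<le> V * r^d" using measure_Nb_split[of d r x w]
    by (simp add: m1_def m2_def m3_def)
  have key: "m1 - (1 - 2*\<eta>) * (m2 - m3) \<ge> 2 * \<phi> * (V * (r/16)^d)"
    using key_geo[OF w x r eta] by (simp add: m1_def m2_def m3_def \<phi>_def V_def)
  have RI: "m0 + exp (-lam) * m1 + (\<eta> * exp (-lam) + (1 - \<eta>) * exp lam) * m2
          + (\<eta> * exp lam + (1 - \<eta>) * exp (-lam)) * m3 \<le> V * (1 - \<phi>^2 * (r/256)^d)"
    by (rule real_ineq[OF mpos sumV up key eta \<phi>_def lam_def])
  then have "S \<le> V * (1 - \<phi>^2 * (r/256)^d)" by (simp add: S_def c1_def c2_def c3_def algebra_simps)
  then have SV: "S / V \<le> 1 - \<phi>^2 * (r/256)^d" using Vp by (simp add: divide_le_eq mult.commute)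
  have "(\<integral>\<^sup>+ p. ennreal (exp (- lam * Zf d r w x p)) \<partial>(uniform_ball d \<Otimes>\<^sub>M measure_pmf (bernoulli_pmf \<eta>)))
      = ennreal S / ennreal V"
    using step1 int_eq2 by (simp add: emeasure_U U_def V_def)
  also have "\<dots> = ennreal (S / V)" using Spos Vp by (simp add: divide_ennreal)
  also have "\<dots> \<le> ennreal (1 - \<phi>^2 * (r/256)^d)" using SV by (rule ennreal_leI)
  finally show ?thesis by (simp add: lam_def \<phi>_def)
qed




lemma prod_le_pow_ennreal:
  fixes f :: "'a \<Rightarrow> ennreal"
  assumes "finite A" "\<And>i. i \<in> A \<Longrightarrow> f i \<le> c"
  shows "prod f A \<le> c ^ card A"
  using assms
proof (induction A rule: finite_induct)
  case (insert a A)
  have "prod f (insert a A) = f a * prod f A" using insert.hyps by simp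
  also have "\<dots> \<le> c * c ^ card A" using insert by (intro mult_mono) auto
  finally show ?case using insert.hyps by simp
qed simp

abbreviation "Mp d \<eta> \<equiv> uniform_ball d \<Otimes>\<^sub>M measure_pmf (bernoulli_pmf \<eta>)"

lemma space_Mp: "space (Mp d \<eta>) = space (LL d) \<times> UNIV"
  by (simp add: space_pair_measure uniform_ball_def)

lemma meas_fst_comp:
  assumes "i \<in> I"
  shows "(\<lambda>\<omega>. fst (\<omega> i)) \<in> PiM I (\<lambda>_. Mp d \<eta>) \<rightarrow>\<^sub>M LL d"
proof -
  have "(\<lambda>\<omega>. \<omega> i) \<in> PiM I (\<lambda>_. Mp d \<eta>) \<rightarrow>\<^sub>M Mp d \<eta>" using assms by simp
  moreover have "fst \<in> Mp d \<eta> \<rightarrow>\<^sub>M uniform_ball d" by simp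
  ultimately have "(\<lambda>\<omega>. fst (\<omega> i)) \<in> PiM I (\<lambda>_. Mp d \<eta>) \<rightarrow>\<^sub>M uniform_ball d"
    using measurable_comp by (auto simp: comp_def)
  moreover have "PiM I (\<lambda>_. Mp d \<eta>) \<rightarrow>\<^sub>M uniform_ball d = PiM I (\<lambda>_. Mp d \<eta>) \<rightarrow>\<^sub>M LL d"
    by (rule measurable_cong_sets) (simp_all add: uniform_ball_def)
  ultimately show ?thesis by simp
qed

lemma meas_snd_comp:
  assumes "i \<in> I"
  shows "(\<lambda>\<omega>. snd (\<omega> i)) \<in> PiM I (\<lambda>_. Mp d \<eta>) \<rightarrow>\<^sub>M count_space UNIV"
proof -
  have a: "(\<lambda>\<omega>. \<omega> i) \<in> PiM I (\<lambda>_. Mp d \<eta>) \<rightarrow>\<^sub>M Mp d \<eta>" using assms by simp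
  have b: "snd \<in> Mp d \<eta> \<rightarrow>\<^sub>M count_space UNIV"
  proof -
    have "snd \<in> Mp d \<eta> \<rightarrow>\<^sub>M measure_pmf (bernoulli_pmf \<eta>)" by simp
    moreover have "Mp d \<eta> \<rightarrow>\<^sub>M measure_pmf (bernoulli_pmf \<eta>) = Mp d \<eta> \<rightarrow>\<^sub>M count_space UNIV"
      by (rule measurable_cong_sets) simp_all
    ultimately show ?thesis by simp
  qed
  show ?thesis using measurable_comp[OF a b] by (simp add: comp_def)
qed

lemma Zij_meas:
  assumes "i \<in> I" "j \<in> I"
  shows "(\<lambda>\<omega>. Zf d r w (fst (\<omega> j)) (\<omega> i)) \<in> borel_measurable (PiM I (\<lambda>_. Mp d \<eta>))"
  using Zf_meas2[OF meas_fst_comp[OF assms(2)] meas_fst_comp[OF assms(1)] meas_snd_comp[OF assms(1)]]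
  by simp

lemma AE_Mp_U: "AE y in Mp d \<eta>. fst y \<in> unit_ball_d d"
proof -
  interpret UB: prob_space "uniform_ball d" by (rule prob_space_ub)
  interpret B: prob_space "measure_pmf (bernoulli_pmf \<eta>)" by (rule prob_space_measure_pmf)
  have Us: "unit_ball_d d \<in> sets (LL d)" by simp
  have n: "(space (LL d) - unit_ball_d d) \<in> null_sets (uniform_ball d)"
  proof -
    have s: "space (LL d) - unit_ball_d d \<in> sets (LL d)" by simp
    have "emeasure (uniform_ball d) (space (LL d) - unit_ball_d d) = emeasure (LL d) (unit_ball_d d \<inter> (space (LL d) - unit_ball_d d)) / emeasure (LL d) (unit_ball_d d)"
      unfolding uniform_ball_def by (rule emeasure_uniform_measure[OF Us s])
    also have "\<dots> = 0" by simp
    finally show ?thesis using s by (simp add: null_sets_def uniform_ball_def)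
  qed
  have N: "(space (LL d) - unit_ball_d d) \<times> space (measure_pmf (bernoulli_pmf \<eta>)) \<in> null_sets (Mp d \<eta>)"
    by (rule sigma_finite_measure.times_in_null_sets1[OF prob_space_imp_sigma_finite[OF prob_space_measure_pmf] n]) simp
  show ?thesis
    by (rule AE_I'[OF N]) (auto simp: space_Mp)
qed




lemma prob_space_Mp: "prob_space (Mp d \<eta>)"
  by (rule prob_space_pair[OF prob_space_ub prob_space_measure_pmf])

lemma bad_bound:
  assumes w: "(\<Sum>k<d. (w k)^2) = 1" and r: "0 < r" "r \<le> 1/2"
    and eta: "0 < \<eta>" "\<eta> < 1/2" and j: "j < N"
  shows "emeasure (sensor_model d N \<eta>)
           {\<omega> \<in> space (sensor_model d N \<eta>). (\<Sum>i\<in>{..<N} - {j}. Zf d r w (fst (\<omega> j)) (\<omega> i)) \<le> 0}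
         \<le> ennreal ((1 - (min \<eta> (1/2 - \<eta>))^2 * (r/256)^d) ^ (N - 1))"
proof -
  define \<phi> where "\<phi> = min \<eta> (1/2 - \<eta>)"
  define lam where "lam = \<phi> / 16^d"
  define q0 where "q0 = \<phi>^2 * (r/256)^d"
  define I' where "I' = {..<N} - {j}"
  have I': "finite I'" "j \<notin> I'" "{..<N} = insert j I'" "card I' = N - 1" using j by (auto simp: I'_def)
  have lam0: "0 \<le> lam" using eta by (simp add: lam_def \<phi>_def)
  interpret MP: prob_space "Mp d \<eta>" by (rule prob_space_Mp)
  interpret product_sigma_finite "\<lambda>_::nat. Mp d \<eta>"
    unfolding product_sigma_finite_def using prob_space_imp_sigma_finite[OF prob_space_Mp] by blast
  define SM where "SM = PiM {..<N} (\<lambda>_. Mp d \<eta>)"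
  have SMdef: "sensor_model d N \<eta> = SM" by (simp add: sensor_model_def SM_def)
  define F where "F y p = ennreal (exp (- lam * Zf d r w (fst y) p))" for y :: "(nat \<Rightarrow> real) \<times> bool" and p
  define g where "g \<omega> = (\<Prod>i\<in>I'. F (\<omega> j) (\<omega> i))" for \<omega> :: "nat \<Rightarrow> (nat \<Rightarrow> real) \<times> bool"
  have Zm: "(\<lambda>\<omega>. Zf d r w (fst (\<omega> j)) (\<omega> i)) \<in> borel_measurable SM" if "i < N" for i
    unfolding SM_def by (rule Zij_meas) (use that j in auto)
  have gmi: "(\<lambda>\<omega>. F (\<omega> j) (\<omega> i)) \<in> borel_measurable SM" if "i < N" for i
  proof -
    note [measurable] = Zm[OF that]
    show ?thesis unfolding F_def by measurable
  qed
  have gm: "g \<in> borel_measurable SM"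
    unfolding g_def by (rule borel_measurable_prod_ennreal) (use gmi in \<open>auto simp: I'_def\<close>)
  define bad where "bad = {\<omega> \<in> space SM. (\<Sum>i\<in>I'. Zf d r w (fst (\<omega> j)) (\<omega> i)) \<le> 0}"
  have badm: "bad \<in> sets SM"
  proof -
    have "(\<lambda>\<omega>. \<Sum>i\<in>I'. Zf d r w (fst (\<omega> j)) (\<omega> i)) \<in> borel_measurable SM"
      by (rule borel_measurable_sum) (use Zm in \<open>auto simp: I'_def\<close>)
    then show ?thesis unfolding bad_def by measurable
  qed
  have ind_le: "indicator bad \<omega> \<le> g \<omega>" for \<omega>
  proof (cases "\<omega> \<in> bad")
    case True
    then have s: "(\<Sum>i\<in>I'. Zf d r w (fst (\<omega> j)) (\<omega> i)) \<le> 0" by (simp add: bad_def)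
    have "g \<omega> = ennreal (\<Prod>i\<in>I'. exp (- lam * Zf d r w (fst (\<omega> j)) (\<omega> i)))"
      unfolding g_def F_def by (rule prod_ennreal) simp
    also have "(\<Prod>i\<in>I'. exp (- lam * Zf d r w (fst (\<omega> j)) (\<omega> i))) = exp (- lam * (\<Sum>i\<in>I'. Zf d r w (fst (\<omega> j)) (\<omega> i)))"
      using I'(1) by (simp add: exp_sum sum_distrib_left)
    finally have e: "g \<omega> = ennreal (exp (- lam * (\<Sum>i\<in>I'. Zf d r w (fst (\<omega> j)) (\<omega> i))))" .
    have "1 \<le> exp (- lam * (\<Sum>i\<in>I'. Zf d r w (fst (\<omega> j)) (\<omega> i)))" using s lam0 by (simp add: mult_nonneg_nonpos)
    then have "ennreal 1 \<le> g \<omega>" unfolding e by (rule ennreal_leI)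
    then show ?thesis using True by (simp add: indicator_def)
  qed (simp add: indicator_def)
  have "emeasure SM bad = (\<integral>\<^sup>+ \<omega>. indicator bad \<omega> \<partial>SM)" using badm by simp
  also have "\<dots> \<le> (\<integral>\<^sup>+ \<omega>. g \<omega> \<partial>SM)" by (rule nn_integral_mono) (rule ind_le)
  also have "\<dots> = (\<integral>\<^sup>+ y. (\<integral>\<^sup>+ x. g (x(j := y)) \<partial>PiM I' (\<lambda>_. Mp d \<eta>)) \<partial>Mp d \<eta>)"
    unfolding SM_def I'(3) by (rule product_nn_integral_insert_rev) (use I' gm[unfolded SM_def I'(3)] in auto)
  also have "\<dots> = (\<integral>\<^sup>+ y. (\<Prod>i\<in>I'. (\<integral>\<^sup>+ p. F y p \<partial>Mp d \<eta>)) \<partial>Mp d \<eta>)"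
  proof (rule nn_integral_cong)
    fix y assume y: "y \<in> space (Mp d \<eta>)"
    then have ys: "fst y \<in> space (LL d)" by (auto simp: space_Mp)
    have "g (x(j := y)) = (\<Prod>i\<in>I'. F y (x i))" for x
      unfolding g_def using I'(2) by (intro prod.cong) auto
    then have "(\<integral>\<^sup>+ x. g (x(j := y)) \<partial>PiM I' (\<lambda>_. Mp d \<eta>)) = (\<integral>\<^sup>+ x. (\<Prod>i\<in>I'. F y (x i)) \<partial>PiM I' (\<lambda>_. Mp d \<eta>))"
      by simp
    also have "\<dots> = (\<Prod>i\<in>I'. (\<integral>\<^sup>+ p. F y p \<partial>Mp d \<eta>))"
      by (rule product_nn_integral_prod) (use I' Zf_meas_pair[OF ys] in \<open>auto simp: F_def\<close>)
    finally show "(\<integral>\<^sup>+ x. g (x(j := y)) \<partial>PiM I' (\<lambda>_. Mp d \<eta>)) = (\<Prod>i\<in>I'. (\<integral>\<^sup>+ p. F y p \<partial>Mp d \<eta>))" .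
  qed
  also have "\<dots> \<le> (\<integral>\<^sup>+ y. ennreal (1 - q0) ^ card I' \<partial>Mp d \<eta>)"
  proof (rule nn_integral_mono_AE)
    show "AE y in Mp d \<eta>. (\<Prod>i\<in>I'. (\<integral>\<^sup>+ p. F y p \<partial>Mp d \<eta>)) \<le> ennreal (1 - q0) ^ card I'"
      using AE_Mp_U
    proof eventually_elim
      case (elim y)
      have "(\<integral>\<^sup>+ p. F y p \<partial>Mp d \<eta>) \<le> ennreal (1 - q0)"
        using per_x[OF w elim r eta] by (simp add: F_def lam_def \<phi>_def q0_def)
      then show ?case by (intro prod_le_pow_ennreal) (use I' in auto)
    qed
  qed
  also have "\<dots> = ennreal (1 - q0) ^ card I'" by (simp add: MP.emeasure_space_1)
  also have "\<dots> = ennreal ((1 - q0) ^ (N - 1))"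
  proof -
    have "q0 \<le> 1"
    proof -
      have "\<phi>^2 \<le> 1" using eta by (auto simp: \<phi>_def min_def power2_eq_square intro: mult_le_one)
      moreover have "(r/256)^d \<le> 1" using r by (intro power_le_one) auto
      ultimately show ?thesis unfolding q0_def using r by (intro mult_le_one) auto
    qed
    then show ?thesis using I'(4) by (simp add: ennreal_power)
  qed
  finally show ?thesis unfolding SMdef bad_def q0_def \<phi>_def I'_def .
qed




lemma init_pm1: "init_state d w \<omega> i \<in> {-1, 1}"
  by (simp add: init_state_def target_def)

lemma Zf_init: "Zf d r w y (\<omega> i) = (if dist_d d (fst (\<omega> i)) y \<le> r then
     (if hh d w (fst (\<omega> i)) < hh d w y then 1 else - real_of_int (init_state d w \<omega> i)) else 0)"
  by (simp add: Zf_def init_state_def)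

lemma sweep:
  assumes good: "\<forall>j<N. 0 < (\<Sum>i\<in>{..<N} - {j}. Zf d r w (fst (\<omega> j)) (\<omega> i))"
  shows "consensus_event d N r w \<omega>"
proof -
  define x where "x i = fst (\<omega> i)" for i
  define h where "h i = hh d w (x i)" for i
  define xs where "xs = sort_key h [0..<N]"
  define \<pi> where "\<pi> = (!) xs"
  have xs: "distinct xs" "set xs = {..<N}" "length xs = N" "sorted (map h xs)"
    by (auto simp: xs_def length_sort)
  have bij: "bij_betw \<pi> {..<N} {..<N}"
    unfolding \<pi>_def by (rule bij_betw_nth) (use xs in auto)
  have ord: "m < k" if "m < N" "k < N" "h (\<pi> m) < h (\<pi> k)" for m k
  proof (rule ccontr)
    assume "\<not> m < k"
    then have "k \<le> m" by simp
    then have "map h xs ! k \<le> map h xs ! m" using xs(4) that(1) xs(3) by (intro sorted_nth_mono) auto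
    then show False using that xs(3) by (simp add: \<pi>_def)
  qed
  have \<pi>N: "\<pi> m < N" if "m < N" for m using bij that by (auto simp: bij_betw_def)
  have \<pi>surj: "\<exists>m<N. \<pi> m = i" if "i < N" for i
  proof -
    have "i \<in> \<pi> ` {..<N}" using bij that by (simp add: bij_betw_def)
    then show ?thesis by auto
  qed
  have \<pi>inj: "inj_on \<pi> {..<N}" using bij by (auto simp: bij_betw_def)
  show ?thesis
    unfolding consensus_event_def
  proof (intro exI[of _ \<pi>] conjI allI impI)
    show "bij_betw \<pi> {..<N} {..<N}" by (rule bij)
    fix b :: "nat \<Rightarrow> int" assume b: "\<forall>k. b k \<in> {-1, 1}"
    define s0 where "s0 = init_state d w \<omega>"
    define run where "run k = async_run d N r (\<lambda>i. fst (\<omega> i)) \<pi> b s0 k" for k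
    have inv: "k \<le> N \<Longrightarrow> run k = (\<lambda>i. if i \<in> \<pi> ` {..<k} then -1 else s0 i)" for k
    proof (induction k)
      case 0 then show ?case by (simp add: run_def)
    next
      case (Suc k)
      then have k: "k < N" by simp
      have IH: "run k = (\<lambda>i. if i \<in> \<pi> ` {..<k} then -1 else s0 i)" using Suc by simp
      define j where "j = \<pi> k"
      have j: "j < N" using \<pi>N k by (simp add: j_def)
      define S where "S = (\<Sum>i\<in>neighbors d N r (\<lambda>i. fst (\<omega> i)) j. run k i)"
      have nb_le: "Zf d r w (x j) (\<omega> i) \<le> - real_of_int (run k i)" if i: "i \<in> neighbors d N r (\<lambda>i. fst (\<omega> i)) j" for i
      proof -
        have iN: "i < N" and dij: "dist_d d (x i) (x j) \<le> r" using i by (auto simp: neighbors_def x_def)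
        show ?thesis
        proof (cases "h i < h j")
          case True
          obtain m where m: "m < N" "\<pi> m = i" using \<pi>surj[OF iN] by blast
          have "m < k" using ord[OF m(1) k] True m(2) by (simp add: j_def)
          then have "run k i = -1" using IH m(2) by auto
          moreover have "Zf d r w (x j) (\<omega> i) \<le> 1"
            using Zf_init[of d r w "x j" \<omega> i] init_pm1[of d w \<omega> i] by auto
          ultimately show ?thesis by simp
        next
          case False
          then have Zeq: "Zf d r w (x j) (\<omega> i) = - real_of_int (s0 i)"
            using Zf_init[of d r w "x j" \<omega> i] dij by (simp add: x_def h_def s0_def)
          have "s0 i \<in> {-1, 1}" unfolding s0_def by (rule init_pm1)
          then show ?thesis using IH Zeq by auto
        qed
      qed
      have "(\<Sum>i\<in>{..<N} - {j}. Zf d r w (x j) (\<omega> i)) = (\<Sum>i\<in>neighbors d N r (\<lambda>i. fst (\<omega> i)) j. Zf d r w (x j) (\<omega> i))"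
      proof (rule sum.mono_neutral_right)
        show "finite ({..<N} - {j})" by simp
        show "neighbors d N r (\<lambda>i. fst (\<omega> i)) j \<subseteq> {..<N} - {j}" by (auto simp: neighbors_def)
        show "\<forall>i\<in>{..<N} - {j} - neighbors d N r (\<lambda>i. fst (\<omega> i)) j. Zf d r w (x j) (\<omega> i) = 0"
          by (auto simp: neighbors_def Zf_def x_def)
      qed
      also have "\<dots> \<le> (\<Sum>i\<in>neighbors d N r (\<lambda>i. fst (\<omega> i)) j. - real_of_int (run k i))"
        by (rule sum_mono) (rule nb_le)
      also have "\<dots> = - real_of_int S" by (simp add: S_def sum_negf)
      finally have "0 < - real_of_int S" using good j by (auto simp: x_def)
      then have Sneg: "S < 0" by simp
      have "run (Suc k) = (run k)(j := -1)"
        using Sneg by (simp add: run_def br_update_def S_def j_def Let_def)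
      then show ?case using IH by (auto simp: j_def lessThan_Suc fun_eq_iff)
    qed
    have "run N = (\<lambda>i. if i \<in> \<pi> ` {..<N} then -1 else s0 i)" by (rule inv) simp
    moreover have "\<pi> ` {..<N} = {..<N}" using bij by (simp add: bij_betw_def)
    ultimately have "\<forall>i<N. run N i = -1" by simp
    then show "\<exists>v. \<forall>i<N. async_run d N r (\<lambda>i. fst (\<omega> i)) \<pi> b (init_state d w \<omega>) N i = v"
      by (auto simp: run_def s0_def)
  qed
qed




lemma final_arith:
  fixes q \<delta> :: real and N :: nat
  assumes q: "0 < q" "q \<le> 1" and \<delta>: "0 < \<delta>" "\<delta> < 1"
    and hN: "real N \<ge> 16 / q * (ln (8 / q) + ln (1 / \<delta>))"
  shows "real N * (1 - q) ^ (N - 1) \<le> \<delta>"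
proof -
  define L where "L = ln (8 / q) + ln (1 / \<delta>)"
  have l8: "1 \<le> ln (8::real)" using exp_le by (subst ln_ge_iff) auto
  have Lq: "ln (8 / q) = ln 8 - ln q" using q by (simp add: ln_div)
  have Ld: "ln (1 / \<delta>) = - ln \<delta>" using \<delta> by (simp add: ln_div)
  have ld: "ln \<delta> < 0" using \<delta> by simp
  have lq: "ln q \<le> 0" using q by simp
  have L0: "0 < L" unfolding L_def Lq Ld using l8 ld lq by linarith
  have "0 < 16 / q * L" using q L0 by simp
  then have Npos: "0 < real N" using hN by (simp add: L_def)
  define y where "y = q * real N"
  have y0: "0 < y" using q Npos by (simp add: y_def)
  have yL: "y \<ge> 16 * L"
  proof -
    have "q * (16 / q * L) \<le> q * real N" using hN q by (intro mult_left_mono) (auto simp: L_def)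
    then show ?thesis using q by (simp add: y_def)
  qed
  have lny: "ln y \<le> y / 2"
  proof -
    have "ln (y / 2) \<le> y / 2 - 1" using y0 by (intro ln_le_minus_one) simp
    moreover have "ln y = ln (y / 2) + ln 2" using y0 by (simp add: ln_div)
    moreover have "ln (2::real) \<le> 1" using ln_le_minus_one[of 2] by simp
    ultimately show ?thesis by linarith
  qed
  have lnN: "ln (real N) = ln y - ln q" using q Npos by (simp add: y_def ln_mult)
  have "(1 - q) ^ (N - 1) \<le> exp (- q) ^ (N - 1)"
    using q by (intro power_mono) (auto simp: exp_ge_add_one_self[of "-q", simplified])
  also have "\<dots> = exp (- q * real (N - 1))" by (simp add: exp_of_nat_mult[symmetric] mult.commute)
  finally have p: "(1 - q) ^ (N - 1) \<le> exp (- q * real (N - 1))" .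
  have NN: "real (N - 1) = real N - 1" using Npos by (simp add: of_nat_diff)
  have "real N * (1 - q) ^ (N - 1) \<le> real N * exp (- q * real (N - 1))"
    using p Npos by (intro mult_left_mono) auto
  also have "\<dots> = exp (ln (real N) - q * real N + q)"
    using Npos by (simp add: exp_diff exp_add NN algebra_simps exp_minus field_simps)
  also have "\<dots> \<le> exp (ln \<delta>)"
  proof -
    have "ln (real N) - q * real N + q \<le> ln \<delta>"
    proof -
      define Y where "Y = q * real N"
      have a: "ln (real N) = ln Y - ln q" using lnN by (simp add: Y_def y_def)
      have b: "ln Y \<le> Y / 2" using lny by (simp add: Y_def y_def)
      have c: "16 * ln 8 - 16 * ln q - 16 * ln \<delta> \<le> Y" using yL by (simp add: Y_def y_def L_def Lq Ld algebra_simps)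
      have "ln (real N) - Y + q \<le> ln \<delta>" using a b c l8 q lq ld by linarith
      then show ?thesis by (simp add: Y_def)
    qed
    then show ?thesis by simp
  qed
  also have "\<dots> = \<delta>" using \<delta> by simp
  finally show ?thesis .
qed




lemma bad_sets:
  assumes j: "j < N"
  shows "{\<omega> \<in> space (sensor_model d N \<eta>). (\<Sum>i\<in>{..<N} - {j}. Zf d r w (fst (\<omega> j)) (\<omega> i)) \<le> 0} \<in> sets (sensor_model d N \<eta>)"
proof -
  have "(\<lambda>\<omega>. \<Sum>i\<in>{..<N} - {j}. Zf d r w (fst (\<omega> j)) (\<omega> i)) \<in> borel_measurable (sensor_model d N \<eta>)"
    unfolding sensor_model_def by (rule borel_measurable_sum) (rule Zij_meas, use j in auto)
  then show ?thesis by measurable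
qed

lemma main_bound:
  assumes d: "d \<ge> 1" and r: "0 < r" "r \<le> 1/2" and eta: "0 < \<eta>" "\<eta> < 1/2"
    and \<delta>: "0 < \<delta>" "\<delta> < 1" and w: "(\<Sum>i<d. (w i)^2) = 1"
    and hN: "real N \<ge> 16 / (((1/256)*r)^d * (min \<eta> (1/2 - \<eta>))^2) *
               (ln (8 / (((1/256)*r)^d * (min \<eta> (1/2 - \<eta>))^2)) + ln (1/\<delta>))"
  shows "\<exists>A \<in> sets (sensor_model d N \<eta>).
         A \<subseteq> {\<omega> \<in> space (sensor_model d N \<eta>). consensus_event d N r w \<omega>} \<and>
         measure (sensor_model d N \<eta>) A \<ge> 1 - \<delta>"
proof -
  define \<phi> where "\<phi> = min \<eta> (1/2 - \<eta>)"
  define q where "q = ((1/256)*r)^d * \<phi>^2"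
  have ph: "0 < \<phi>" "\<phi> \<le> 1" using eta by (auto simp: \<phi>_def)
  have q0: "0 < q" using ph r by (simp add: q_def)
  have q1: "q \<le> 1"
  proof -
    have "((1/256)*r)^d \<le> 1" using r by (intro power_le_one) auto
    moreover have "\<phi>^2 \<le> 1" using ph by (simp add: power_le_one)
    ultimately show ?thesis unfolding q_def using r ph by (intro mult_le_one) auto
  qed
  have qe: "(min \<eta> (1/2 - \<eta>))^2 * (r/256)^d = q" by (simp add: q_def \<phi>_def mult.commute)
  have hq: "real N \<ge> 16 / q * (ln (8 / q) + ln (1/\<delta>))" using hN by (simp add: q_def \<phi>_def)
  have fa: "real N * (1 - q) ^ (N - 1) \<le> \<delta>" by (rule final_arith[OF q0 q1 \<delta> hq])
  define SM where "SM = sensor_model d N \<eta>"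
  interpret PS: prob_space SM
    unfolding SM_def sensor_model_def by (rule prob_space_PiM) (rule prob_space_Mp)
  define B where "B j = {\<omega> \<in> space SM. (\<Sum>i\<in>{..<N} - {j}. Zf d r w (fst (\<omega> j)) (\<omega> i)) \<le> 0}" for j
  have Bs: "B j \<in> sets SM" if "j < N" for j unfolding B_def SM_def by (rule bad_sets[OF that])
  have Bm: "measure SM (B j) \<le> (1 - q) ^ (N - 1)" if j: "j < N" for j
  proof -
    have "emeasure SM (B j) \<le> ennreal ((1 - q) ^ (N - 1))"
      using bad_bound[OF w r eta j] by (simp add: B_def SM_def qe)
    then have "ennreal (measure SM (B j)) \<le> ennreal ((1 - q) ^ (N - 1))" by (simp add: PS.emeasure_eq_measure)
    then show ?thesis using q1 by (subst (asm) ennreal_le_iff) auto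
  qed
  define A where "A = space SM - (\<Union>j\<in>{..<N}. B j)"
  have As: "A \<in> sets SM" unfolding A_def using Bs by auto
  have Asub: "A \<subseteq> {\<omega> \<in> space SM. consensus_event d N r w \<omega>}"
  proof
    fix \<omega> assume a: "\<omega> \<in> A"
    then have "\<forall>j<N. 0 < (\<Sum>i\<in>{..<N} - {j}. Zf d r w (fst (\<omega> j)) (\<omega> i))"
      by (auto simp: A_def B_def not_le)
    then have "consensus_event d N r w \<omega>" by (rule sweep)
    then show "\<omega> \<in> {\<omega> \<in> space SM. consensus_event d N r w \<omega>}" using a by (auto simp: A_def)
  qed
  have "measure SM (\<Union>j\<in>{..<N}. B j) \<le> (\<Sum>j\<in>{..<N}. measure SM (B j))"
    by (rule PS.finite_measure_subadditive_finite) (use Bs in auto)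
  also have "\<dots> \<le> (\<Sum>j\<in>{..<N}. (1 - q) ^ (N - 1))" by (rule sum_mono) (rule Bm, simp)
  also have "\<dots> = real N * (1 - q) ^ (N - 1)" by simp
  finally have U: "measure SM (\<Union>j\<in>{..<N}. B j) \<le> \<delta>" using fa by linarith
  have "measure SM A = 1 - measure SM (\<Union>j\<in>{..<N}. B j)"
    unfolding A_def by (rule PS.prob_compl) (use Bs in auto)
  then have "measure SM A \<ge> 1 - \<delta>" using U by simp
  then show ?thesis using As Asub unfolding SM_def by blast
qed

theorem theorem3:
  shows "\<exists>c::real. c > 0 \<and>
    (\<forall>(d::nat) (N::nat) (r::real) (\<eta>::real) (\<delta>::real) (w::nat \<Rightarrow> real).
      d \<ge> 1 \<longrightarrow> 0 < r \<longrightarrow> r \<le> 1/2 \<longrightarrow> 0 < \<eta> \<longrightarrow> \<eta> < 1/2 \<longrightarrow>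
      0 < \<delta> \<longrightarrow> \<delta> < 1 \<longrightarrow> (\<Sum>i<d. (w i)^2) = 1 \<longrightarrow>
      (let \<phi> = min \<eta> (1/2 - \<eta>) in
        real N \<ge> 16 / ((c*r)^d * \<phi>^2) * (ln (8 / ((c*r)^d * \<phi>^2)) + ln (1/\<delta>))) \<longrightarrow>
      (\<exists>A \<in> sets (sensor_model d N \<eta>).
         A \<subseteq> {\<omega> \<in> space (sensor_model d N \<eta>). consensus_event d N r w \<omega>} \<and>
         measure (sensor_model d N \<eta>) A \<ge> 1 - \<delta>))"
proof (intro exI[of _ "1/256"] conjI allI impI)
  fix d N r \<eta> \<delta> and w :: "nat \<Rightarrow> real"
  assume "d \<ge> 1" "0 < r" "r \<le> 1/2" "0 < \<eta>" "\<eta> < 1/2" "0 < \<delta>" "\<delta> < 1" "(\<Sum>i<d. (w i)^2) = 1"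
    and h: "let \<phi> = min \<eta> (1/2 - \<eta>) in
        real N \<ge> 16 / (((1/256)*r)^d * \<phi>^2) * (ln (8 / (((1/256)*r)^d * \<phi>^2)) + ln (1/\<delta>))"
  then show "\<exists>A \<in> sets (sensor_model d N \<eta>).
         A \<subseteq> {\<omega> \<in> space (sensor_model d N \<eta>). consensus_event d N r w \<omega>} \<and>
         measure (sensor_model d N \<eta>) A \<ge> 1 - \<delta>"
    by (intro main_bound) (simp_all add: Let_def)
qed simp


end
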